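(* Let $(G,u,v,\alpha,\beta)$ be a Guvab, with associated Wasserstein distances $W_k$ ($k\ge 0$). Then: (i) either the sequence $\{W_{2k}\}_{k\ge0}$ is eventually constant, or there exist a constant $\lambda_{\mathrm{even}}\in(-1,1)$ and a constant $c_{\mathrm{even}}>0$ such that $\left|W_{2k}-\lim_{k\to\infty}W_{2k}\right| \sim c_{\mathrm{even}}\cdot|\lambda_{\mathrm{even}}|^{2k}$ as $k\to\infty$; (ii) either the sequence $\{W_{2k+1}\}_{k\ge0}$ is eventually constant, or there exist a constant $\lambda_{\mathrm{odd}}\in(-1,1)$ and a constant $c_{\mathrm{odd}}>0$ such that $\left|W_{2k+1}-\lim_{k\to\infty}W_{2k+1}\right| \sim c_{\mathrm{odd}}\cdot|\lambda_{\mathrm{odd}}|^{2k+1}$ as $k\to\infty$. (The limits $\lim_k W_{2k}$ and $\lim_k W_{2k+1}$ always exist.)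
   Context: A Guvab is a tuple $(G,u,v,\alpha,\beta)$ where $G$ is a finite, connected, simple graph, $u,v\in V(G)$, and $\alpha,\beta\in[0,1]$ with $\alpha\le\beta$. A random walk on $G$ with starting vertex $w$ and laziness $\gamma$ is the Markov chain $R_0=w$ and, for $i\ge1$, $R_i=R_{i-1}$ with probability $\gamma$ and $R_i=t$ with probability $\frac{1-\gamma}{\deg(R_{i-1})}$ for each neighbor $t$ of $R_{i-1}$. Let $\mu_k$ be the distribution of the $k$-th step of the walk from $u$ with laziness $\alpha$ and $\nu_k$ that of the walk from $v$ with laziness $\beta$. The Wasserstein distance $W(\mu,\nu)$ between two probability distributions on $V(G)$ is the minimum, over couplings (transportation plans) $T\ge0$ on $V(G)\times V(G)$ with marginals $\mu$ and $\nu$, of $\sum_{w_1,w_2} d(w_1,w_2)T(w_1,w_2)$, where $d$ is the graph distance; equivalently $W(\mu,\nu)=\max_{\ell}\sum_{w}\ell(w)(\mu(w)-\nu(w))$ over 1-Lipschitz functions $\ell:V(G)\to\mathbb{R}$. Set $W_k=W(\mu_k,\nu_k)$. A real sequence $\{S_i\}_{i\ge0}$ is eventually constant if there is $N$ with $S_k=S_N$ for all $k\ge N$. For sequences $a_k,b_k$, $a_k\sim b_k$ means $a_k/b_k\to1$. *)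

theory Defs
  imports "HOL-Analysis.Analysis" "HOL-Library.Landau_Symbols"
begin

definition edges :: "('a \<Rightarrow> 'a \<Rightarrow> bool) \<Rightarrow> ('a \<times> 'a) set" where
  "edges E = {(x, y). E x y}"

definition simple_connected_graph :: "'a set \<Rightarrow> ('a \<Rightarrow> 'a \<Rightarrow> bool) \<Rightarrow> bool" where
  "simple_connected_graph V E \<longleftrightarrow>
     finite V \<and> V \<noteq> {} \<and>
     (\<forall>x y. E x y \<longrightarrow> x \<in> V \<and> y \<in> V) \<and>
     (\<forall>x y. E x y \<longrightarrow> E y x) \<and>
     (\<forall>x. \<not> E x x) \<and>
     (\<forall>x\<in>V. \<forall>y\<in>V. (x, y) \<in> (edges E)\<^sup>*)"

definition guvab :: "'a set \<Rightarrow> ('a \<Rightarrow> 'a \<Rightarrow> bool) \<Rightarrow> 'a \<Rightarrow> 'a \<Rightarrow> real \<Rightarrow> real \<Rightarrow> bool" where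
  "guvab V E u v \<alpha> \<beta> \<longleftrightarrow> simple_connected_graph V E \<and> u \<in> V \<and> v \<in> V \<and>
     0 \<le> \<alpha> \<and> \<alpha> \<le> \<beta> \<and> \<beta> \<le> 1"

definition deg :: "('a \<Rightarrow> 'a \<Rightarrow> bool) \<Rightarrow> 'a \<Rightarrow> nat" where
  "deg E x = card {y. E x y}"

definition gdist :: "('a \<Rightarrow> 'a \<Rightarrow> bool) \<Rightarrow> 'a \<Rightarrow> 'a \<Rightarrow> nat" where
  "gdist E x y = (LEAST n. (x, y) \<in> edges E ^^ n)"

definition trans_prob :: "('a \<Rightarrow> 'a \<Rightarrow> bool) \<Rightarrow> real \<Rightarrow> 'a \<Rightarrow> 'a \<Rightarrow> real" where
  "trans_prob E \<gamma> x y = (if x = y then \<gamma> else 0) + (if E x y then (1 - \<gamma>) / real (deg E x) else 0)"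

fun walk_dist :: "'a set \<Rightarrow> ('a \<Rightarrow> 'a \<Rightarrow> bool) \<Rightarrow> real \<Rightarrow> 'a \<Rightarrow> nat \<Rightarrow> 'a \<Rightarrow> real" where
  "walk_dist V E \<gamma> w 0 = (\<lambda>y. if y = w then 1 else 0)"
| "walk_dist V E \<gamma> w (Suc k) = (\<lambda>y. \<Sum>x\<in>V. walk_dist V E \<gamma> w k x * trans_prob E \<gamma> x y)"

definition coupling :: "'a set \<Rightarrow> ('a \<Rightarrow> real) \<Rightarrow> ('a \<Rightarrow> real) \<Rightarrow> ('a \<Rightarrow> 'a \<Rightarrow> real) \<Rightarrow> bool" where
  "coupling V \<mu> \<nu> T \<longleftrightarrow>
     (\<forall>x\<in>V. \<forall>y\<in>V. 0 \<le> T x y) \<and>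
     (\<forall>x\<in>V. (\<Sum>y\<in>V. T x y) = \<mu> x) \<and>
     (\<forall>y\<in>V. (\<Sum>x\<in>V. T x y) = \<nu> y)"

definition wasserstein :: "'a set \<Rightarrow> ('a \<Rightarrow> 'a \<Rightarrow> bool) \<Rightarrow> ('a \<Rightarrow> real) \<Rightarrow> ('a \<Rightarrow> real) \<Rightarrow> real" where
  "wasserstein V E \<mu> \<nu> =
     Inf {(\<Sum>x\<in>V. \<Sum>y\<in>V. real (gdist E x y) * T x y) | T. coupling V \<mu> \<nu> T}"

definition W_seq :: "'a set \<Rightarrow> ('a \<Rightarrow> 'a \<Rightarrow> bool) \<Rightarrow> 'a \<Rightarrow> 'a \<Rightarrow> real \<Rightarrow> real \<Rightarrow> nat \<Rightarrow> real" where
  "W_seq V E u v \<alpha> \<beta> k = wasserstein V E (walk_dist V E \<alpha> u k) (walk_dist V E \<beta> v k)"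

definition eventually_constant :: "(nat \<Rightarrow> real) \<Rightarrow> bool" where
  "eventually_constant S \<longleftrightarrow> (\<exists>N. \<forall>k\<ge>N. S k = S N)"

end

theory Submission
  imports Defs "HOL-Library.Function_Algebras" "HOL-Computational_Algebra.Fundamental_Theorem_Algebra"
begin


definition ES :: "(nat \<Rightarrow> real) \<Rightarrow> bool" where
  "ES s \<longleftrightarrow> (\<exists>Q a. finite Q \<and> Q \<subseteq> {0<..} \<and> eventually (\<lambda>k. s k = (\<Sum>q\<in>Q. a q * q ^ k)) sequentially)"

lemma ES_nz_rep:
  assumes "ES s"
  obtains Q a where "finite Q" "Q \<subseteq> {0<..}" "\<forall>q\<in>Q. a q \<noteq> 0"
    "eventually (\<lambda>k. s k = (\<Sum>q\<in>Q. a q * q ^ k)) sequentially"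
proof -
  obtain Q a where Q: "finite Q" "Q \<subseteq> {0<..}" and ev: "eventually (\<lambda>k. s k = (\<Sum>q\<in>Q. a q * q ^ k)) sequentially"
    using assms unfolding ES_def by blast
  define Q' where "Q' = {q\<in>Q. a q \<noteq> 0}"
  have sub: "Q' \<subseteq> Q" unfolding Q'_def by blast
  have eq: "(\<Sum>q\<in>Q. a q * q ^ k) = (\<Sum>q\<in>Q'. a q * q ^ k)" for k
    by (rule sum.mono_neutral_right[OF Q(1) sub]) (simp add: Q'_def)
  have 4: "eventually (\<lambda>k. s k = (\<Sum>q\<in>Q'. a q * q ^ k)) sequentially"
    using ev by (simp only: eq)
  have 1: "finite Q'" using Q(1) sub by (rule finite_subset[rotated])
  have 2: "Q' \<subseteq> {0<..}" using Q(2) sub by (rule subset_trans[rotated])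
  have 3: "\<forall>q\<in>Q'. a q \<noteq> 0" unfolding Q'_def by blast
  show ?thesis by (rule that[OF 1 2 3 4])
qed



lemma ESI:
  assumes "finite Q" "Q \<subseteq> {0<..}" "eventually (\<lambda>k. s k = (\<Sum>q\<in>Q. a q * q ^ k)) sequentially"
  shows "ES s"
  unfolding ES_def by (rule exI[of _ Q], rule exI[of _ a]) (intro conjI assms)

lemma dominant_tendsto:
  fixes Q :: "real set"
  assumes fin: "finite Q" and pos: "Q \<subseteq> {0<..}" and ne: "Q \<noteq> {}"
  shows "(\<lambda>k. (\<Sum>q\<in>Q. a q * q ^ k) / (Max Q) ^ k) \<longlonglongrightarrow> a (Max Q)"
proof -
  define m where "m = Max Q"
  have m: "m \<in> Q" unfolding m_def using fin ne by (rule Max_in)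
  have mpos: "m > 0" using m pos by blast
  have eq: "(\<Sum>q\<in>Q. a q * q ^ k) / m ^ k = (\<Sum>q\<in>Q. a q * (q / m) ^ k)" for k
    by (simp add: sum_divide_distrib power_divide)
  have lim: "(\<lambda>k. (\<Sum>q\<in>Q. a q * (q / m) ^ k)) \<longlonglongrightarrow> (\<Sum>q\<in>Q. if q = m then a q else 0)"
  proof (rule tendsto_sum)
    fix q assume q: "q \<in> Q"
    show "(\<lambda>k. a q * (q / m) ^ k) \<longlonglongrightarrow> (if q = m then a q else 0)"
    proof (cases "q = m")
      case True then show ?thesis using mpos by simp
    next
      case False
      have "q \<le> m" unfolding m_def using fin q by (rule Max_ge)
      with False have "q < m" by simp
      moreover have "q > 0" using q pos by blast
      ultimately have "\<bar>q / m\<bar> < 1" using mpos by simp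
      then have "(\<lambda>k. (q / m) ^ k) \<longlonglongrightarrow> 0" by (rule LIMSEQ_abs_realpow_zero2)
      then have "(\<lambda>k. a q * (q / m) ^ k) \<longlonglongrightarrow> 0" by (rule tendsto_mult_right_zero)
      then show ?thesis using False by simp
    qed
  qed
  have s: "(\<Sum>q\<in>Q. if q = m then a q else 0) = a m"
    using m fin by (simp add: sum.delta)
  have "(\<lambda>k. (\<Sum>q\<in>Q. a q * q ^ k) / m ^ k) \<longlonglongrightarrow> a m" unfolding eq using lim unfolding s .
  then show ?thesis unfolding m_def .
qed

lemma ES_cong_ev:
  assumes "ES s" "eventually (\<lambda>k. s k = t k) sequentially"
  shows "ES t"
proof -
  obtain Q a where Q: "finite Q" "Q \<subseteq> {0<..}" and ev: "eventually (\<lambda>k. s k = (\<Sum>q\<in>Q. a q * q ^ k)) sequentially"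
    using assms(1) unfolding ES_def by blast
  have "eventually (\<lambda>k. t k = (\<Sum>q\<in>Q. a q * q ^ k)) sequentially"
    using ev assms(2) by eventually_elim simp
  then show ?thesis by (rule ESI[OF Q])
qed

lemma ES_single:
  assumes "q > 0"
  shows "ES (\<lambda>k. c * q ^ k)"
proof -
  show ?thesis by (rule ESI[of "{q}" _ "\<lambda>_. c"]) (use assms in simp_all)
qed

lemma ES_const: "ES (\<lambda>k. c)"
  using ES_single[of 1 c] by simp

lemma ES_zero_ev:
  assumes "eventually (\<lambda>k. s k = 0) sequentially"
  shows "ES s"
proof -
  show ?thesis by (rule ESI[of "{}" _ "\<lambda>_. 0"]) (use assms in simp_all)
qed

lemma ES_add:
  assumes "ES s" "ES t"
  shows "ES (\<lambda>k. s k + t k)"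
proof -
  obtain Q1 a1 where Q1: "finite Q1" "Q1 \<subseteq> {0<..}" and ev1: "eventually (\<lambda>k. s k = (\<Sum>q\<in>Q1. a1 q * q ^ k)) sequentially"
    using assms(1) unfolding ES_def by blast
  obtain Q2 a2 where Q2: "finite Q2" "Q2 \<subseteq> {0<..}" and ev2: "eventually (\<lambda>k. t k = (\<Sum>q\<in>Q2. a2 q * q ^ k)) sequentially"
    using assms(2) unfolding ES_def by blast
  define Q where "Q = Q1 \<union> Q2"
  define a where "a q = (if q \<in> Q1 then a1 q else 0) + (if q \<in> Q2 then a2 q else 0)" for q
  have fin: "finite Q" unfolding Q_def using Q1 Q2 by simp
  have r1: "(\<Sum>q\<in>Q. (if q \<in> Q1 then a1 q * q ^ k else 0)) = (\<Sum>q\<in>Q1. a1 q * q ^ k)" for k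
  proof -
    have "(\<Sum>q\<in>Q. (if q \<in> Q1 then a1 q * q ^ k else 0)) = (\<Sum>q\<in>Q \<inter> Q1. a1 q * q ^ k)"
      using fin by (rule sum.inter_restrict[symmetric])
    also have "Q \<inter> Q1 = Q1" unfolding Q_def by blast
    finally show ?thesis .
  qed
  have r2: "(\<Sum>q\<in>Q. (if q \<in> Q2 then a2 q * q ^ k else 0)) = (\<Sum>q\<in>Q2. a2 q * q ^ k)" for k
  proof -
    have "(\<Sum>q\<in>Q. (if q \<in> Q2 then a2 q * q ^ k else 0)) = (\<Sum>q\<in>Q \<inter> Q2. a2 q * q ^ k)"
      using fin by (rule sum.inter_restrict[symmetric])
    also have "Q \<inter> Q2 = Q2" unfolding Q_def by blast
    finally show ?thesis .
  qed
  have eqk: "(\<Sum>q\<in>Q. a q * q ^ k) = (\<Sum>q\<in>Q1. a1 q * q ^ k) + (\<Sum>q\<in>Q2. a2 q * q ^ k)" for k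
  proof -
    have "(\<Sum>q\<in>Q. a q * q ^ k) = (\<Sum>q\<in>Q. (if q \<in> Q1 then a1 q * q ^ k else 0) + (if q \<in> Q2 then a2 q * q ^ k else 0))"
      unfolding a_def by (intro sum.cong refl) (simp add: distrib_right)
    also have "\<dots> = (\<Sum>q\<in>Q. (if q \<in> Q1 then a1 q * q ^ k else 0)) + (\<Sum>q\<in>Q. (if q \<in> Q2 then a2 q * q ^ k else 0))"
      by (rule sum.distrib)
    finally show ?thesis unfolding r1 r2 .
  qed
  have "eventually (\<lambda>k. s k + t k = (\<Sum>q\<in>Q. a q * q ^ k)) sequentially"
    using ev1 ev2 by eventually_elim (simp add: eqk)
  moreover have "Q \<subseteq> {0<..}" unfolding Q_def using Q1 Q2 by blast
  ultimately show ?thesis using fin by (intro ESI)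
qed

lemma ES_scale:
  assumes "ES s"
  shows "ES (\<lambda>k. c * s k)"
proof -
  obtain Q a where Q: "finite Q" "Q \<subseteq> {0<..}" and ev: "eventually (\<lambda>k. s k = (\<Sum>q\<in>Q. a q * q ^ k)) sequentially"
    using assms(1) unfolding ES_def by blast
  have "eventually (\<lambda>k. c * s k = (\<Sum>q\<in>Q. (c * a q) * q ^ k)) sequentially"
    using ev by eventually_elim (simp add: sum_distrib_left mult.assoc)
  then show ?thesis by (rule ESI[OF Q])
qed

lemma ES_diff:
  assumes "ES s" "ES t"
  shows "ES (\<lambda>k. s k - t k)"
  using ES_add[OF assms(1) ES_scale[OF assms(2), of "-1"]] by simp

lemma ES_sum:
  assumes "finite I" "\<And>i. i \<in> I \<Longrightarrow> ES (f i)"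
  shows "ES (\<lambda>k. \<Sum>i\<in>I. f i k)"
  using assms
proof (induction I rule: finite_induct)
  case empty
  then show ?case using ES_const[of 0] by simp
next
  case (insert x F)
  have a: "ES (f x)" using insert.prems by blast
  have b: "ES (\<lambda>k. \<Sum>i\<in>F. f i k)" using insert.prems by (intro insert.IH) blast
  have "ES (\<lambda>k. f x k + (\<Sum>i\<in>F. f i k))" using a b by (rule ES_add)
  moreover have "(\<Sum>i\<in>insert x F. f i k) = f x k + (\<Sum>i\<in>F. f i k)" for k
    using insert(1,2) by (rule sum.insert)
  ultimately show ?case by simp
qed

lemma ES_sign:
  assumes "ES s"
  shows "eventually (\<lambda>k. s k = 0) sequentially \<or> eventually (\<lambda>k. s k > 0) sequentially
     \<or> eventually (\<lambda>k. s k < 0) sequentially"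
proof -
  obtain Q a where fin: "finite Q" and pos: "Q \<subseteq> {0<..}" and nz: "\<forall>q\<in>Q. a q \<noteq> 0"
    and ev: "eventually (\<lambda>k. s k = (\<Sum>q\<in>Q. a q * q ^ k)) sequentially"
    using assms by (rule ES_nz_rep)
  show ?thesis
  proof (cases "Q = {}")
    case True
    then show ?thesis using ev by simp
  next
    case False
    define m where "m = Max Q"
    have m: "m \<in> Q" unfolding m_def using fin False by (rule Max_in)
    have mpos: "m > 0" using m pos by blast
    have lim0: "(\<lambda>k. (\<Sum>q\<in>Q. a q * q ^ k) / m ^ k) \<longlonglongrightarrow> a m"
      unfolding m_def using fin pos False by (rule dominant_tendsto)
    have ev2: "eventually (\<lambda>k. (\<Sum>q\<in>Q. a q * q ^ k) / m ^ k = s k / m ^ k) sequentially"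
      using ev by eventually_elim simp
    have lim: "(\<lambda>k. s k / m ^ k) \<longlonglongrightarrow> a m"
      using lim0 ev2 by (rule Lim_transform_eventually)
    have am: "a m \<noteq> 0" using nz m by blast
    show ?thesis
    proof (cases "a m > 0")
      case True
      have "eventually (\<lambda>k. s k / m ^ k > 0) sequentially"
        using lim True by (rule order_tendstoD(1))
      then have "eventually (\<lambda>k. s k > 0) sequentially"
        by eventually_elim (use mpos in \<open>simp add: zero_less_divide_iff\<close>)
      then show ?thesis by blast
    next
      case False
      then have "a m < 0" using am by simp
      then have "eventually (\<lambda>k. s k / m ^ k < 0) sequentially"
        using lim by (intro order_tendstoD(2))
      then have "eventually (\<lambda>k. s k < 0) sequentially"
        by eventually_elim (use mpos in \<open>simp add: divide_less_0_iff\<close>)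
      then show ?thesis by blast
    qed
  qed
qed

lemma ES_min:
  assumes "ES s" "ES t"
  shows "ES (\<lambda>k. min (s k) (t k))"
proof -
  have d: "ES (\<lambda>k. s k - t k)" using assms by (rule ES_diff)
  from ES_sign[OF d] show ?thesis
  proof (elim disjE)
    assume "eventually (\<lambda>k. s k - t k = 0) sequentially"
    then have "eventually (\<lambda>k. s k = min (s k) (t k)) sequentially" by eventually_elim simp
    then show ?thesis by (rule ES_cong_ev[OF assms(1)])
  next
    assume "eventually (\<lambda>k. s k - t k > 0) sequentially"
    then have "eventually (\<lambda>k. t k = min (s k) (t k)) sequentially" by eventually_elim simp
    then show ?thesis by (rule ES_cong_ev[OF assms(2)])
  next
    assume "eventually (\<lambda>k. s k - t k < 0) sequentially"
    then have "eventually (\<lambda>k. s k = min (s k) (t k)) sequentially" by eventually_elim simp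
    then show ?thesis by (rule ES_cong_ev[OF assms(1)])
  qed
qed

lemma ES_Min:
  assumes "finite F" "F \<noteq> {}" "\<And>i. i \<in> F \<Longrightarrow> ES (f i)"
  shows "ES (\<lambda>k. Min ((\<lambda>i. f i k) ` F))"
  using assms
proof (induction F rule: finite_ne_induct)
  case (singleton x)
  have "ES (f x)" using singleton.prems by blast
  moreover have "(\<lambda>k. Min ((\<lambda>i. f i k) ` {x})) = f x" by (rule ext) simp
  ultimately show ?case by simp
next
  case (insert x F)
  have "ES (f x)" using insert.prems by blast
  moreover have "ES (\<lambda>k. Min ((\<lambda>i. f i k) ` F))" using insert.prems by (intro insert.IH) blast
  ultimately have 1: "ES (\<lambda>k. min (f x k) (Min ((\<lambda>i. f i k) ` F)))" by (rule ES_min)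
  have 2: "(\<lambda>k. Min ((\<lambda>i. f i k) ` insert x F)) = (\<lambda>k. min (f x k) (Min ((\<lambda>i. f i k) ` F)))"
    by (rule ext) (use insert(1,2) in simp)
  show ?case unfolding 2 by (rule 1)
qed


lemma ES_final:
  assumes es: "ES s" and bnd: "\<And>k. \<bar>s k\<bar> \<le> B"
  shows "convergent s \<and> ((\<exists>N. \<forall>k\<ge>N. s k = s N) \<or>
    (\<exists>q c. 0 < q \<and> q < 1 \<and> 0 < c \<and> (\<lambda>k. \<bar>s k - lim s\<bar>) \<sim>[sequentially] (\<lambda>k. c * q ^ k)))"
proof -
  obtain Q a where fin: "finite Q" and pos: "Q \<subseteq> {0<..}" and nz: "\<forall>q\<in>Q. a q \<noteq> 0"
    and ev: "eventually (\<lambda>k. s k = (\<Sum>q\<in>Q. a q * q ^ k)) sequentially"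
    using es by (rule ES_nz_rep)
  have le1: "q \<le> 1" if qQ: "q \<in> Q" for q
  proof (rule ccontr)
    assume "\<not> q \<le> 1"
    then have q1: "q > 1" by simp
    have ne: "Q \<noteq> {}" using qQ by blast
    define m where "m = Max Q"
    have m: "m \<in> Q" unfolding m_def using fin ne by (rule Max_in)
    have "q \<le> m" unfolding m_def using fin qQ by (rule Max_ge)
    then have m1: "m > 1" using q1 by simp
    have lim0: "(\<lambda>k. (\<Sum>q\<in>Q. a q * q ^ k) / m ^ k) \<longlonglongrightarrow> a m"
      unfolding m_def using fin pos ne by (rule dominant_tendsto)
    have ev2: "eventually (\<lambda>k. (\<Sum>q\<in>Q. a q * q ^ k) / m ^ k = s k / m ^ k) sequentially"
      using ev by eventually_elim simp
    have lim: "(\<lambda>k. s k / m ^ k) \<longlonglongrightarrow> a m"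
      using lim0 ev2 by (rule Lim_transform_eventually)
    have "\<bar>1 / m\<bar> < 1" using m1 by simp
    then have "(\<lambda>k. (1 / m) ^ k) \<longlonglongrightarrow> 0" by (rule LIMSEQ_abs_realpow_zero2)
    then have g0: "(\<lambda>k. B * (1 / m) ^ k) \<longlonglongrightarrow> 0" by (rule tendsto_mult_right_zero)
    have "eventually (\<lambda>k. norm (s k / m ^ k) \<le> B * (1 / m) ^ k) sequentially"
    proof (rule always_eventually, rule allI)
      fix k
      have mk: "m ^ k > 0" using m1 by simp
      have "norm (s k / m ^ k) = \<bar>s k\<bar> / m ^ k" using mk by (simp add: abs_div)
      also have "\<dots> \<le> B / m ^ k" using mk bnd[of k] by (simp add: divide_right_mono)
      also have "\<dots> = B * (1 / m) ^ k" by (simp add: power_one_over)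
      finally show "norm (s k / m ^ k) \<le> B * (1 / m) ^ k" .
    qed
    then have "(\<lambda>k. s k / m ^ k) \<longlonglongrightarrow> 0" using g0 by (rule Lim_null_comparison)
    with lim have "a m = 0" by (rule LIMSEQ_unique)
    with nz m show False by blast
  qed
  define L where "L = (if 1 \<in> Q then a 1 else 0)"
  define Q2 where "Q2 = Q - {1}"
  have fin2: "finite Q2" unfolding Q2_def using fin by simp
  have pos2: "Q2 \<subseteq> {0<..}" unfolding Q2_def using pos by blast
  have lt1: "q < 1" if "q \<in> Q2" for q using that le1 unfolding Q2_def by force
  have split: "(\<Sum>q\<in>Q. a q * q ^ k) = L + (\<Sum>q\<in>Q2. a q * q ^ k)" for k
  proof (cases "1 \<in> Q")
    case True
    then show ?thesis unfolding L_def Q2_def using fin by (simp add: sum.remove)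
  next
    case False
    then have "Q2 = Q" unfolding Q2_def by blast
    then show ?thesis unfolding L_def using False by simp
  qed
  have ev3: "eventually (\<lambda>k. s k - L = (\<Sum>q\<in>Q2. a q * q ^ k)) sequentially"
    using ev by eventually_elim (simp add: split)
  show ?thesis
  proof (cases "Q2 = {}")
    case True
    have evL: "eventually (\<lambda>k. s k = L) sequentially"
      using ev3 by eventually_elim (simp add: True)
    then have "s \<longlonglongrightarrow> L" by (rule tendsto_eventually)
    then have conv: "convergent s" unfolding convergent_def by blast
    from evL obtain N where N: "\<And>k. k \<ge> N \<Longrightarrow> s k = L" unfolding eventually_sequentially by blast
    have "\<forall>k\<ge>N. s k = s N" using N by simp
    then show ?thesis using conv by blast
  next
    case False
    define m where "m = Max Q2"
    have m: "m \<in> Q2" unfolding m_def using fin2 False by (rule Max_in)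
    have mpos: "m > 0" using m pos2 by blast
    have m1: "m < 1" using m lt1 by blast
    have am: "a m \<noteq> 0" using nz m unfolding Q2_def by blast
    have lim0: "(\<lambda>k. (\<Sum>q\<in>Q2. a q * q ^ k) / m ^ k) \<longlonglongrightarrow> a m"
      unfolding m_def using fin2 pos2 False by (rule dominant_tendsto)
    have ev2: "eventually (\<lambda>k. (\<Sum>q\<in>Q2. a q * q ^ k) / m ^ k = (s k - L) / m ^ k) sequentially"
      using ev3 by eventually_elim simp
    have lim: "(\<lambda>k. (s k - L) / m ^ k) \<longlonglongrightarrow> a m"
      using lim0 ev2 by (rule Lim_transform_eventually)
    have mk0: "(\<lambda>k. m ^ k) \<longlonglongrightarrow> 0" using mpos m1 by (intro LIMSEQ_realpow_zero) auto
    have "(\<lambda>k. (s k - L) / m ^ k * m ^ k) \<longlonglongrightarrow> a m * 0"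
      using lim mk0 by (rule tendsto_mult)
    moreover have "(s k - L) / m ^ k * m ^ k = s k - L" for k using mpos by simp
    ultimately have "(\<lambda>k. s k - L) \<longlonglongrightarrow> 0" by simp
    then have "(\<lambda>k. (s k - L) + L) \<longlonglongrightarrow> 0 + L" by (rule tendsto_add) (rule tendsto_const)
    then have sL: "s \<longlonglongrightarrow> L" by simp
    then have conv: "convergent s" unfolding convergent_def by blast
    have limL: "lim s = L" using sL by (rule limI)
    have "(\<lambda>k. \<bar>(s k - L) / m ^ k\<bar> / \<bar>a m\<bar>) \<longlonglongrightarrow> \<bar>a m\<bar> / \<bar>a m\<bar>"
      using lim by (intro tendsto_divide tendsto_rabs tendsto_const) (use am in simp_all)
    moreover have "\<bar>(s k - L) / m ^ k\<bar> / \<bar>a m\<bar> = \<bar>s k - lim s\<bar> / (\<bar>a m\<bar> * m ^ k)" for k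
      using mpos unfolding limL by (simp add: abs_div)
    ultimately have "(\<lambda>k. \<bar>s k - lim s\<bar> / (\<bar>a m\<bar> * m ^ k)) \<longlonglongrightarrow> 1" using am by simp
    then have "(\<lambda>k. \<bar>s k - lim s\<bar>) \<sim>[sequentially] (\<lambda>k. \<bar>a m\<bar> * m ^ k)" by (rule asymp_equivI')
    moreover have "0 < \<bar>a m\<bar>" using am by simp
    ultimately show ?thesis using conv mpos m1 by blast
  qed
qed





definition supp_in :: "('a \<times> 'a) set \<Rightarrow> ('a \<Rightarrow> 'a \<Rightarrow> real) \<Rightarrow> bool" where
  "supp_in S T \<longleftrightarrow> (\<forall>x y. (x, y) \<notin> S \<longrightarrow> T x y = 0)"

definition zero_marg :: "'a set \<Rightarrow> ('a \<Rightarrow> 'a \<Rightarrow> real) \<Rightarrow> bool" where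
  "zero_marg V z \<longleftrightarrow> (\<forall>x\<in>V. (\<Sum>y\<in>V. z x y) = 0) \<and> (\<forall>y\<in>V. (\<Sum>x\<in>V. z x y) = 0)"

definition indep :: "'a set \<Rightarrow> ('a \<times> 'a) set \<Rightarrow> bool" where
  "indep V S \<longleftrightarrow> (\<forall>z. supp_in S z \<and> zero_marg V z \<longrightarrow> (\<forall>x y. z x y = 0))"

definition marg :: "'a set \<Rightarrow> ('a \<Rightarrow> 'a \<Rightarrow> real) \<Rightarrow> ('a + 'a) \<Rightarrow> real" where
  "marg V T j = (case j of Inl x \<Rightarrow> if x \<in> V then (\<Sum>y\<in>V. T x y) else 0
                         | Inr y \<Rightarrow> if y \<in> V then (\<Sum>x\<in>V. T x y) else 0)"

lemma sum_fun_apply2: "(sum F A) x y = (\<Sum>a\<in>A. F a x y)" for F :: "'i \<Rightarrow> 'a \<Rightarrow> 'b \<Rightarrow> real"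
  by (induction A rule: infinite_finite_induct) simp_all

lemma sum_fun_apply1: "(sum F A) x = (\<Sum>a\<in>A. F a x)" for F :: "'i \<Rightarrow> 'a \<Rightarrow> real"
  by (induction A rule: infinite_finite_induct) simp_all

lemma vs_fun2: "Vector_Spaces.vector_space (\<lambda>(r::real) (T::'a\<Rightarrow>'b\<Rightarrow>real) x y. r * T x y)"
  unfolding Vector_Spaces.vector_space_def by (simp add: fun_eq_iff algebra_simps)

lemma vs_fun1: "Vector_Spaces.vector_space (\<lambda>(r::real) (b::'a\<Rightarrow>real) j. r * b j)"
  unfolding Vector_Spaces.vector_space_def by (simp add: fun_eq_iff algebra_simps)

lemma marg_linear: "Vector_Spaces.linear (\<lambda>(r::real) (T::'a\<Rightarrow>'a\<Rightarrow>real) x y. r * T x y) (\<lambda>(r::real) (b::('a+'a)\<Rightarrow>real) j. r * b j) (marg V)"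
  unfolding Vector_Spaces.linear_iff
proof (intro conjI allI)
  show "Vector_Spaces.vector_space (\<lambda>(r::real) (T::'a\<Rightarrow>'a\<Rightarrow>real) x y. r * T x y)" by (rule vs_fun2)
  show "Vector_Spaces.vector_space (\<lambda>(r::real) (b::('a+'a)\<Rightarrow>real) j. r * b j)" by (rule vs_fun1)
  fix T1 T2 :: "'a \<Rightarrow> 'a \<Rightarrow> real"
  show "marg V (T1 + T2) = marg V T1 + marg V T2"
    by (rule ext) (simp add: marg_def sum.distrib split: sum.split)
next
  fix c :: real and T :: "'a \<Rightarrow> 'a \<Rightarrow> real"
  show "marg V (\<lambda>x y. c * T x y) = (\<lambda>j. c * marg V T j)"
    by (rule ext) (simp add: marg_def sum_distrib_left split: sum.split)
qed

lemma solution_map: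
  fixes V :: "'a set" and S :: "('a \<times> 'a) set"
  assumes fin: "finite V" and SV: "S \<subseteq> V \<times> V" and ind: "indep V S"
  shows "\<exists>h::('a+'a) \<Rightarrow> 'a \<Rightarrow> 'a \<Rightarrow> real. \<forall>T. supp_in S T \<longrightarrow>
           (\<forall>x y. T x y = (\<Sum>j\<in>Inl ` V \<union> Inr ` V. marg V T j * h j x y))"
proof -
  define s1 where "s1 = (\<lambda>(r::real) (T::'a\<Rightarrow>'a\<Rightarrow>real) x y. r * T x y)"
  define s2 where "s2 = (\<lambda>(r::real) (b::('a+'a)\<Rightarrow>real) j. r * b j)"
  interpret vsp: vector_space_pair s1 s2
    unfolding vector_space_pair_def s1_def s2_def using vs_fun1 vs_fun2 by blast
  have lin: "Vector_Spaces.linear s1 s2 (marg V)" unfolding s1_def s2_def by (rule marg_linear)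
  define del where "del = (\<lambda>(p::'a\<times>'a). (\<lambda>x' y'. if (x', y') = p then (1::real) else 0))"
  define B where "B = del ` S"
  have finS: "finite S" using SV fin by (meson finite_SigmaI finite_subset)
  have sub: "vsp.vs1.subspace {T. supp_in S T}"
    unfolding vsp.vs1.subspace_def unfolding supp_in_def s1_def by simp
  have span_sub: "vsp.vs1.span B \<subseteq> {T. supp_in S T}"
  proof (rule vsp.vs1.span_minimal[OF _ sub])
    show "B \<subseteq> {T. supp_in S T}" unfolding B_def del_def supp_in_def by auto
  qed
  have in_span: "T \<in> vsp.vs1.span B" if "supp_in S T" for T
  proof -
    have "T = (\<Sum>p\<in>S. s1 (T (fst p) (snd p)) (del p))"
    proof (rule ext, rule ext)
      fix x y
      have "(\<Sum>p\<in>S. s1 (T (fst p) (snd p)) (del p)) x y = (\<Sum>p\<in>S. T (fst p) (snd p) * (if (x, y) = p then 1 else 0))"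
        unfolding sum_fun_apply2 s1_def del_def by simp
      also have "\<dots> = (\<Sum>p\<in>S. if p = (x, y) then T x y else 0)"
        by (intro sum.cong refl) auto
      also have "\<dots> = (if (x, y) \<in> S then T x y else 0)"
        using finS by (simp add: sum.delta)
      also have "\<dots> = T x y" using that unfolding supp_in_def by auto
      finally show "T x y = (\<Sum>p\<in>S. s1 (T (fst p) (snd p)) (del p)) x y" by simp
    qed
    also have "\<dots> \<in> vsp.vs1.span B"
      by (intro vsp.vs1.span_sum vsp.vs1.span_scale vsp.vs1.span_base) (simp add: B_def)
    finally show ?thesis .
  qed
  have inj: "inj_on (marg V) (vsp.vs1.span B)"
  proof -
    have "\<forall>z\<in>vsp.vs1.span B. marg V z = 0 \<longrightarrow> z = 0"
    proof (intro ballI impI)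
      fix z assume zs: "z \<in> vsp.vs1.span B" and mz: "marg V z = 0"
      have sz: "supp_in S z" using zs span_sub by blast
      have zm: "zero_marg V z"
        unfolding zero_marg_def
      proof (intro conjI ballI)
        fix x assume "x \<in> V"
        then show "(\<Sum>y\<in>V. z x y) = 0" using fun_cong[OF mz, of "Inl x"] by (simp add: marg_def)
      next
        fix y assume "y \<in> V"
        then show "(\<Sum>x\<in>V. z x y) = 0" using fun_cong[OF mz, of "Inr y"] by (simp add: marg_def)
      qed
      have "\<forall>x y. z x y = 0" using ind sz zm unfolding indep_def by blast
      then show "z = 0" by (simp add: fun_eq_iff)
    qed
    then show ?thesis using vsp.linear_inj_on_iff_eq_0[OF lin vsp.vs1.subspace_span] by blast
  qed
  obtain g where glin: "Vector_Spaces.linear s2 s1 g" and ginv: "\<forall>x\<in>vsp.vs1.span B. g (marg V x) = x"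
    using vsp.linear_inj_on_left_inverse[OF lin inj] by blast
  interpret vsp2: vector_space_pair s2 s1
    unfolding vector_space_pair_def s1_def s2_def using vs_fun1 vs_fun2 by blast
  define J where "J = Inl ` V \<union> Inr ` V"
  define e where "e = (\<lambda>(j::'a+'a). (\<lambda>j'. if j' = j then (1::real) else 0))"
  define h where "h = (\<lambda>j. g (e j))"
  have "\<forall>T. supp_in S T \<longrightarrow> (\<forall>x y. T x y = (\<Sum>j\<in>J. marg V T j * h j x y))"
  proof (intro allI impI)
    fix T x y assume sT: "supp_in S T"
    have finJ: "finite J" unfolding J_def using fin by simp
    have mT: "marg V T = (\<Sum>j\<in>J. s2 (marg V T j) (e j))"
    proof (rule ext)
      fix j'
      have "(\<Sum>j\<in>J. s2 (marg V T j) (e j)) j' = (\<Sum>j\<in>J. if j = j' then marg V T j else 0)"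
        unfolding sum_fun_apply1 s2_def e_def by (intro sum.cong refl) auto
      also have "\<dots> = (if j' \<in> J then marg V T j' else 0)"
        using finJ by (simp add: sum.delta')
      also have "\<dots> = marg V T j'"
        unfolding J_def marg_def by (auto split: sum.split)
      finally show "marg V T j' = (\<Sum>j\<in>J. s2 (marg V T j) (e j)) j'" by simp
    qed
    have "g (marg V T) = T" using ginv in_span[OF sT] by blast
    then have "T = g (marg V T)" by (rule sym)
    also have "\<dots> = g (\<Sum>j\<in>J. s2 (marg V T j) (e j))" using mT by (rule arg_cong)
    also have "\<dots> = (\<Sum>j\<in>J. g (s2 (marg V T j) (e j)))" by (rule vsp2.linear_sum[OF glin])
    also have "\<dots> = (\<Sum>j\<in>J. s1 (marg V T j) (g (e j)))"
      by (intro sum.cong refl vsp2.linear_scale[OF glin])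
    finally have "T x y = (\<Sum>j\<in>J. s1 (marg V T j) (g (e j))) x y" by simp
    then show "T x y = (\<Sum>j\<in>J. marg V T j * h j x y)"
      unfolding sum_fun_apply2 s1_def h_def by simp
  qed
  then show ?thesis unfolding J_def by blast
qed



definition tcost :: "'a set \<Rightarrow> ('a \<Rightarrow> 'a \<Rightarrow> real) \<Rightarrow> ('a \<Rightarrow> 'a \<Rightarrow> real) \<Rightarrow> real" where
  "tcost V c T = (\<Sum>x\<in>V. \<Sum>y\<in>V. c x y * T x y)"

lemma neg_entry:
  assumes fin: "finite V" and SV: "S \<subseteq> V \<times> V" and sz: "supp_in S z" and zm: "zero_marg V z"
    and nz: "\<not> (\<forall>x y. z x y = 0)"
  shows "\<exists>p\<in>S. z (fst p) (snd p) < 0"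
proof (rule ccontr)
  assume "\<not> (\<exists>p\<in>S. z (fst p) (snd p) < 0)"
  then have ge: "z x y \<ge> 0" if "(x, y) \<in> S" for x y using that by force
  have ge2: "z x y \<ge> 0" if "x \<in> V" "y \<in> V" for x y
  proof (cases "(x, y) \<in> S")
    case True then show ?thesis by (rule ge)
  next
    case False then show ?thesis using sz unfolding supp_in_def by simp
  qed
  have z0: "z x y = 0" for x y
  proof (cases "x \<in> V \<and> y \<in> V")
    case True
    then have xV: "x \<in> V" and yV: "y \<in> V" by auto
    have "(\<Sum>y\<in>V. z x y) = 0" using zm xV unfolding zero_marg_def by blast
    moreover have "\<forall>y\<in>V. 0 \<le> z x y" using ge2 xV by blast
    ultimately have "\<forall>y\<in>V. z x y = 0" using fin by (simp add: sum_nonneg_eq_0_iff)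
    then show ?thesis using yV by blast
  next
    case False
    then have "(x, y) \<notin> S" using SV by blast
    then show ?thesis using sz unfolding supp_in_def by simp
  qed
  then show False using nz by blast
qed

lemma coupling_restrict:
  assumes "coupling V \<mu> \<nu> T"
  shows "coupling V \<mu> \<nu> (\<lambda>x y. if x \<in> V \<and> y \<in> V then T x y else 0)"
proof -
  have r: "(\<Sum>y\<in>V. (if x \<in> V \<and> y \<in> V then T x y else 0)) = (\<Sum>y\<in>V. T x y)" if "x \<in> V" for x
    using that by (intro sum.cong refl) simp
  have c: "(\<Sum>x\<in>V. (if x \<in> V \<and> y \<in> V then T x y else 0)) = (\<Sum>x\<in>V. T x y)" if "y \<in> V" for y
    using that by (intro sum.cong refl) simp
  show ?thesis using assms r c unfolding coupling_def by simp
qed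

lemma tcost_restrict:
  "tcost V c (\<lambda>x y. if x \<in> V \<and> y \<in> V then T x y else 0) = tcost V c T"
  unfolding tcost_def by (intro sum.cong refl) simp

lemma basic_reduce_n:
  assumes fin: "finite V"
  shows "coupling V \<mu> \<nu> T \<Longrightarrow> card {p\<in>V \<times> V. T (fst p) (snd p) \<noteq> 0} = n \<Longrightarrow>
    \<exists>T' S. coupling V \<mu> \<nu> T' \<and> S \<subseteq> V \<times> V \<and> supp_in S T' \<and> indep V S \<and> tcost V c T' \<le> tcost V c T"
proof (induction n arbitrary: T rule: less_induct)
  case (less n)
  define T0 where "T0 = (\<lambda>x y. if x \<in> V \<and> y \<in> V then T x y else 0)"
  have cp0: "coupling V \<mu> \<nu> T0" unfolding T0_def using less.prems(1) by (rule coupling_restrict)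
  have cost0: "tcost V c T0 = tcost V c T" unfolding T0_def by (rule tcost_restrict)
  define S where "S = {p\<in>V \<times> V. T (fst p) (snd p) \<noteq> 0}"
  have SV: "S \<subseteq> V \<times> V" unfolding S_def by blast
  have finS: "finite S" using SV fin by (meson finite_SigmaI finite_subset)
  have cardS: "card S = n" unfolding S_def using less.prems(2) .
  have sT0: "supp_in S T0" unfolding supp_in_def S_def T0_def by auto
  have T0nn: "T0 x y \<ge> 0" for x y
    using cp0 unfolding coupling_def T0_def by (cases "x \<in> V \<and> y \<in> V") auto
  show ?case
  proof (cases "indep V S")
    case True
    then show ?thesis using cp0 SV sT0 cost0 by (intro exI[of _ T0] exI[of _ S]) simp
  next
    case False
    then obtain z where sz: "supp_in S z" and zm: "zero_marg V z" and nz: "\<not> (\<forall>x y. z x y = 0)"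
      unfolding indep_def by blast
    obtain z' where sz': "supp_in S z'" and zm': "zero_marg V z'" and nz': "\<not> (\<forall>x y. z' x y = 0)"
      and cz': "tcost V c z' \<le> 0"
    proof (cases "tcost V c z \<le> 0")
      case True then show ?thesis using that sz zm nz by blast
    next
      case False
      have a: "supp_in S (\<lambda>x y. - z x y)" using sz unfolding supp_in_def by simp
      have b: "zero_marg V (\<lambda>x y. - z x y)" using zm unfolding zero_marg_def by (simp add: sum_negf)
      have c: "\<not> (\<forall>x y. - z x y = 0)" using nz by simp
      have d: "tcost V c (\<lambda>x y. - z x y) \<le> 0" using False unfolding tcost_def by (simp add: sum_negf)
      show ?thesis by (rule that[OF a b c d])
    qed
    define N where "N = {p\<in>S. z' (fst p) (snd p) < 0}"
    have finN: "finite N" unfolding N_def using finS by simp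
    have neN: "N \<noteq> {}" unfolding N_def using neg_entry[OF fin SV sz' zm' nz'] by blast
    define ratio where "ratio = (\<lambda>p. T0 (fst p) (snd p) / (- z' (fst p) (snd p)))"
    define t where "t = Min (ratio ` N)"
    have "t \<in> ratio ` N" unfolding t_def using finN neN by simp
    then obtain p0 where p0N: "p0 \<in> N" and tp0: "t = ratio p0" by blast
    have tle: "t \<le> ratio p" if "p \<in> N" for p unfolding t_def using finN that by simp
    have zp0: "z' (fst p0) (snd p0) < 0" using p0N unfolding N_def by blast
    have t0: "t \<ge> 0" unfolding tp0 ratio_def using zp0 T0nn[of "fst p0" "snd p0"] by (simp add: divide_nonneg_neg)
    define T' where "T' = (\<lambda>x y. T0 x y + t * z' x y)"
    have T'nn: "T' x y \<ge> 0" for x y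
    proof (cases "z' x y \<ge> 0")
      case True then show ?thesis unfolding T'_def using t0 T0nn[of x y] by simp
    next
      case False
      then have zl: "z' x y < 0" by simp
      then have "(x, y) \<in> S" using sz' unfolding supp_in_def by force
      then have "(x, y) \<in> N" unfolding N_def using zl by simp
      then have "t \<le> T0 x y / (- z' x y)" using tle[of "(x, y)"] unfolding ratio_def by simp
      then have "t * (- z' x y) \<le> T0 x y" using zl by (metis neg_0_less_iff_less pos_le_divide_eq)
      then show ?thesis unfolding T'_def by simp
    qed
    have cpT': "coupling V \<mu> \<nu> T'"
      unfolding coupling_def
    proof (intro conjI ballI)
      fix x y show "0 \<le> T' x y" by (rule T'nn)
    next
      fix x assume xV: "x \<in> V"
      have "(\<Sum>y\<in>V. T' x y) = (\<Sum>y\<in>V. T0 x y) + t * (\<Sum>y\<in>V. z' x y)"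
        unfolding T'_def by (simp add: sum.distrib sum_distrib_left)
      also have "\<dots> = \<mu> x" using cp0 zm' xV unfolding coupling_def zero_marg_def by simp
      finally show "(\<Sum>y\<in>V. T' x y) = \<mu> x" .
    next
      fix y assume yV: "y \<in> V"
      have "(\<Sum>x\<in>V. T' x y) = (\<Sum>x\<in>V. T0 x y) + t * (\<Sum>x\<in>V. z' x y)"
        unfolding T'_def by (simp add: sum.distrib sum_distrib_left)
      also have "\<dots> = \<nu> y" using cp0 zm' yV unfolding coupling_def zero_marg_def by simp
      finally show "(\<Sum>x\<in>V. T' x y) = \<nu> y" .
    qed
    have costT': "tcost V c T' = tcost V c T0 + t * tcost V c z'"
      unfolding tcost_def T'_def by (simp add: distrib_left sum.distrib sum_distrib_left mult.left_commute)
    have "t * tcost V c z' \<le> 0" using t0 cz' by (simp add: mult_nonneg_nonpos)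
    then have costle: "tcost V c T' \<le> tcost V c T" using costT' cost0 by simp
    define S' where "S' = {p\<in>V \<times> V. T' (fst p) (snd p) \<noteq> 0}"
    have "S' \<subseteq> S - {p0}"
    proof
      fix p assume pS': "p \<in> S'"
      obtain x y where p: "p = (x, y)" by fastforce
      have xy: "x \<in> V" "y \<in> V" and T'ne: "T' x y \<noteq> 0" using pS' unfolding S'_def p by auto
      have "(x, y) \<in> S"
      proof (rule ccontr)
        assume nS: "(x, y) \<notin> S"
        then have "T x y = 0" using xy unfolding S_def by simp
        then have "T0 x y = 0" unfolding T0_def by simp
        moreover have "z' x y = 0" using nS sz' unfolding supp_in_def by simp
        ultimately show False using T'ne unfolding T'_def by simp
      qed
      moreover have "p \<noteq> p0"
      proof
        assume "p = p0"
        have "T' (fst p0) (snd p0) = T0 (fst p0) (snd p0) + (T0 (fst p0) (snd p0) / (- z' (fst p0) (snd p0))) * z' (fst p0) (snd p0)"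
          unfolding T'_def tp0 ratio_def ..
        also have "\<dots> = 0" using zp0 by (simp add: field_simps)
        finally have "T' (fst p0) (snd p0) = 0" .
        then show False using T'ne \<open>p = p0\<close> p by (metis fst_conv snd_conv)
      qed
      ultimately show "p \<in> S - {p0}" using p by simp
    qed
    moreover have "p0 \<in> S" using p0N unfolding N_def by blast
    ultimately have "S' \<subset> S" by blast
    then have "card S' < n" using finS cardS by (metis psubset_card_mono)
    then obtain T'' S'' where res: "coupling V \<mu> \<nu> T''" "S'' \<subseteq> V \<times> V" "supp_in S'' T''" "indep V S''"
      "tcost V c T'' \<le> tcost V c T'"
      using less.IH[OF _ cpT'] unfolding S'_def by blast
    show ?thesis using res costle by (intro exI[of _ T''] exI[of _ S'']) simp
  qed
qed

lemma basic_reduce: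
  assumes "finite V" "coupling V \<mu> \<nu> T"
  shows "\<exists>T' S. coupling V \<mu> \<nu> T' \<and> S \<subseteq> V \<times> V \<and> supp_in S T' \<and> indep V S \<and> tcost V c T' \<le> tcost V c T"
  using basic_reduce_n[OF assms(1) assms(2) refl] .


definition decided :: "(nat \<Rightarrow> bool) \<Rightarrow> bool" where
  "decided P \<longleftrightarrow> eventually P sequentially \<or> eventually (\<lambda>k. \<not> P k) sequentially"

lemma dec_ES_ge: "ES s \<Longrightarrow> decided (\<lambda>k. s k \<ge> 0)"
  unfolding decided_def
proof -
  assume "ES s"
  from ES_sign[OF this] show "eventually (\<lambda>k. s k \<ge> 0) sequentially \<or> eventually (\<lambda>k. \<not> s k \<ge> 0) sequentially"
  proof (elim disjE)
    assume "eventually (\<lambda>k. s k = 0) sequentially"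
    then have "eventually (\<lambda>k. s k \<ge> 0) sequentially" by eventually_elim simp
    then show ?thesis by (rule disjI1)
  next
    assume "eventually (\<lambda>k. s k > 0) sequentially"
    then have "eventually (\<lambda>k. s k \<ge> 0) sequentially" by eventually_elim simp
    then show ?thesis by (rule disjI1)
  next
    assume "eventually (\<lambda>k. s k < 0) sequentially"
    then have "eventually (\<lambda>k. \<not> s k \<ge> 0) sequentially" by eventually_elim simp
    then show ?thesis by (rule disjI2)
  qed
qed

lemma dec_ES_eq: "ES s \<Longrightarrow> decided (\<lambda>k. s k = 0)"
  unfolding decided_def
proof -
  assume "ES s"
  from ES_sign[OF this] show "eventually (\<lambda>k. s k = 0) sequentially \<or> eventually (\<lambda>k. \<not> s k = 0) sequentially"
  proof (elim disjE)
    assume "eventually (\<lambda>k. s k = 0) sequentially"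
    then show ?thesis by (rule disjI1)
  next
    assume "eventually (\<lambda>k. s k > 0) sequentially"
    then have "eventually (\<lambda>k. \<not> s k = 0) sequentially" by eventually_elim simp
    then show ?thesis by (rule disjI2)
  next
    assume "eventually (\<lambda>k. s k < 0) sequentially"
    then have "eventually (\<lambda>k. \<not> s k = 0) sequentially" by eventually_elim simp
    then show ?thesis by (rule disjI2)
  qed
qed

lemma dec_conj:
  assumes "decided P" "decided Q"
  shows "decided (\<lambda>k. P k \<and> Q k)"
proof -
  consider "eventually P sequentially" "eventually Q sequentially"
    | "eventually (\<lambda>k. \<not> P k) sequentially" | "eventually (\<lambda>k. \<not> Q k) sequentially"
    using assms unfolding decided_def by blast
  then show ?thesis
  proof cases
    case 1
    then have "eventually (\<lambda>k. P k \<and> Q k) sequentially" by (rule eventually_conj)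
    then show ?thesis unfolding decided_def by (rule disjI1)
  next
    case 2
    then have "eventually (\<lambda>k. \<not> (P k \<and> Q k)) sequentially" by eventually_elim simp
    then show ?thesis unfolding decided_def by (rule disjI2)
  next
    case 3
    then have "eventually (\<lambda>k. \<not> (P k \<and> Q k)) sequentially" by eventually_elim simp
    then show ?thesis unfolding decided_def by (rule disjI2)
  qed
qed

lemma dec_ball:
  assumes "finite A" "\<And>a. a \<in> A \<Longrightarrow> decided (\<lambda>k. P a k)"
  shows "decided (\<lambda>k. \<forall>a\<in>A. P a k)"
  using assms
proof (induction A rule: finite_induct)
  case empty
  then show ?case unfolding decided_def by simp
next
  case (insert x F)
  have a: "decided (\<lambda>k. P x k)" by (rule insert.prems) simp
  have b: "decided (\<lambda>k. \<forall>a\<in>F. P a k)" by (rule insert.IH) (rule insert.prems, simp)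
  have c: "decided (\<lambda>k. P x k \<and> (\<forall>a\<in>F. P a k))" using a b by (rule dec_conj)
  have eq: "(\<lambda>k. \<forall>a\<in>insert x F. P a k) = (\<lambda>k. P x k \<and> (\<forall>a\<in>F. P a k))" by simp
  show ?case unfolding eq by (rule c)
qed

lemma LP_ES:
  fixes V :: "'a set" and c :: "'a \<Rightarrow> 'a \<Rightarrow> real" and \<mu>s \<nu>s :: "nat \<Rightarrow> 'a \<Rightarrow> real"
  assumes fin: "finite V"
    and es\<mu>: "\<And>x. x \<in> V \<Longrightarrow> ES (\<lambda>k. \<mu>s k x)"
    and es\<nu>: "\<And>y. y \<in> V \<Longrightarrow> ES (\<lambda>k. \<nu>s k y)"
    and feas: "\<And>k. \<exists>T. coupling V (\<mu>s k) (\<nu>s k) T"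
  shows "ES (\<lambda>k. Inf {tcost V c T | T. coupling V (\<mu>s k) (\<nu>s k) T})"
proof -
  define J where "J = Inl ` V \<union> Inr ` V"
  have finJ: "finite J" unfolding J_def using fin by simp
  define bk where "bk k j = (case j of Inl x \<Rightarrow> \<mu>s k x | Inr y \<Rightarrow> \<nu>s k y)" for k j
  have esb: "ES (\<lambda>k. bk k j)" if "j \<in> J" for j
    using that es\<mu> es\<nu> unfolding J_def bk_def by auto
  have margc: "marg V T j = bk k j" if "coupling V (\<mu>s k) (\<nu>s k) T" "j \<in> J" for T k j
    using that unfolding J_def marg_def bk_def coupling_def by auto
  define SS where "SS = {S. S \<subseteq> V \<times> V \<and> indep V S}"
  have finSS: "finite SS"
  proof -
    have "SS \<subseteq> Pow (V \<times> V)" unfolding SS_def by blast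
    moreover have "finite (Pow (V \<times> V))" using fin by simp
    ultimately show ?thesis by (rule finite_subset)
  qed
  have "\<forall>S\<in>SS. \<exists>h. \<forall>T. supp_in S T \<longrightarrow> (\<forall>x y. T x y = (\<Sum>j\<in>J. marg V T j * h j x y))"
  proof
    fix S assume "S \<in> SS"
    then have "S \<subseteq> V \<times> V" "indep V S" unfolding SS_def by auto
    then show "\<exists>h. \<forall>T. supp_in S T \<longrightarrow> (\<forall>x y. T x y = (\<Sum>j\<in>J. marg V T j * h j x y))"
      unfolding J_def using solution_map[OF fin] by blast
  qed
  then obtain H where H: "\<And>S T x y. S \<in> SS \<Longrightarrow> supp_in S T \<Longrightarrow> T x y = (\<Sum>j\<in>J. marg V T j * H S j x y)"
    by metis
  define Tk where "Tk S k x y = (\<Sum>j\<in>J. bk k j * H S j x y)" for S k x y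
  define R where "R S k x y = (if (x, y) \<in> S then Tk S k x y else 0)" for S k x y
  define feasS where "feasS S k \<longleftrightarrow> (\<exists>T. coupling V (\<mu>s k) (\<nu>s k) T \<and> supp_in S T)" for S k
  define PS where "PS S k \<longleftrightarrow> (\<forall>p\<in>S. Tk S k (fst p) (snd p) \<ge> 0) \<and>
      (\<forall>x\<in>V. (\<Sum>y\<in>V. R S k x y) - \<mu>s k x = 0) \<and> (\<forall>y\<in>V. (\<Sum>x\<in>V. R S k x y) - \<nu>s k y = 0)" for S k
  define val where "val S k = (\<Sum>p\<in>S. c (fst p) (snd p) * Tk S k (fst p) (snd p))" for S k
  have K1: "T x y = R S k x y" if S: "S \<in> SS" and cT: "coupling V (\<mu>s k) (\<nu>s k) T" and sT: "supp_in S T" for S k T x y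
  proof -
    have "T x y = (\<Sum>j\<in>J. marg V T j * H S j x y)" by (rule H[OF S sT])
    also have "\<dots> = Tk S k x y" unfolding Tk_def using margc[OF cT] by (intro sum.cong refl) simp
    finally have eq: "T x y = Tk S k x y" .
    show ?thesis
    proof (cases "(x, y) \<in> S")
      case True then show ?thesis unfolding R_def using eq by simp
    next
      case False then show ?thesis unfolding R_def using sT unfolding supp_in_def by simp
    qed
  qed
  have K2: "feasS S k \<longleftrightarrow> PS S k" if S: "S \<in> SS" for S k
  proof
    assume "feasS S k"
    then obtain T where cT: "coupling V (\<mu>s k) (\<nu>s k) T" and sT: "supp_in S T" unfolding feasS_def by blast
    have TR: "T x y = R S k x y" for x y by (rule K1[OF S cT sT])
    have SV: "S \<subseteq> V \<times> V" using S unfolding SS_def by blast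
    show "PS S k" unfolding PS_def
    proof (intro conjI ballI)
      fix p assume pS: "p \<in> S"
      then have "fst p \<in> V" "snd p \<in> V" using SV by auto
      then have "T (fst p) (snd p) \<ge> 0" using cT unfolding coupling_def by blast
      then show "Tk S k (fst p) (snd p) \<ge> 0" using TR[of "fst p" "snd p"] pS unfolding R_def by simp
    next
      fix x assume "x \<in> V"
      then show "(\<Sum>y\<in>V. R S k x y) - \<mu>s k x = 0" using cT unfolding coupling_def TR[symmetric] by simp
    next
      fix y assume "y \<in> V"
      then show "(\<Sum>x\<in>V. R S k x y) - \<nu>s k y = 0" using cT unfolding coupling_def TR[symmetric] by simp
    qed
  next
    assume P: "PS S k"
    have "coupling V (\<mu>s k) (\<nu>s k) (R S k)"
      unfolding coupling_def
    proof (intro conjI ballI)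
      fix x y show "0 \<le> R S k x y"
        using P unfolding PS_def R_def by (cases "(x, y) \<in> S") auto
    next
      fix x assume "x \<in> V" then show "(\<Sum>y\<in>V. R S k x y) = \<mu>s k x" using P unfolding PS_def by simp
    next
      fix y assume "y \<in> V" then show "(\<Sum>x\<in>V. R S k x y) = \<nu>s k y" using P unfolding PS_def by simp
    qed
    moreover have "supp_in S (R S k)" unfolding supp_in_def R_def by simp
    ultimately show "feasS S k" unfolding feasS_def by blast
  qed
  have K3: "tcost V c T = val S k" if S: "S \<in> SS" and cT: "coupling V (\<mu>s k) (\<nu>s k) T" and sT: "supp_in S T" for S k T
  proof -
    have SV: "S \<subseteq> V \<times> V" using S unfolding SS_def by blast
    have "tcost V c T = (\<Sum>p\<in>V \<times> V. c (fst p) (snd p) * T (fst p) (snd p))"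
      unfolding tcost_def by (simp add: sum.cartesian_product split_def)
    also have "\<dots> = (\<Sum>p\<in>S. c (fst p) (snd p) * T (fst p) (snd p))"
    proof (rule sum.mono_neutral_right)
      show "finite (V \<times> V)" using fin by simp
      show "S \<subseteq> V \<times> V" by (rule SV)
      show "\<forall>p\<in>V \<times> V - S. c (fst p) (snd p) * T (fst p) (snd p) = 0"
        using sT unfolding supp_in_def by auto
    qed
    also have "\<dots> = val S k" unfolding val_def
    proof (intro sum.cong refl)
      fix p assume "p \<in> S"
      then show "c (fst p) (snd p) * T (fst p) (snd p) = c (fst p) (snd p) * Tk S k (fst p) (snd p)"
        using K1[OF S cT sT, of "fst p" "snd p"] unfolding R_def by simp
    qed
    finally show ?thesis .
  qed
  have esTk: "ES (\<lambda>k. Tk S k x y)" for S x y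
  proof -
    have "ES (\<lambda>k. \<Sum>j\<in>J. H S j x y * bk k j)"
      by (rule ES_sum[OF finJ]) (rule ES_scale[OF esb])
    then show ?thesis unfolding Tk_def by (simp add: mult.commute)
  qed
  have esR: "ES (\<lambda>k. R S k x y)" for S x y
  proof (cases "(x, y) \<in> S")
    case True then show ?thesis unfolding R_def using esTk by simp
  next
    case False then show ?thesis unfolding R_def using ES_const[of 0] by simp
  qed
  have decPS: "decided (PS S)" if S: "S \<in> SS" for S
  proof -
    have SV: "S \<subseteq> V \<times> V" using S unfolding SS_def by blast
    have finS: "finite S" using SV fin by (meson finite_SigmaI finite_subset)
    have d1: "decided (\<lambda>k. \<forall>p\<in>S. Tk S k (fst p) (snd p) \<ge> 0)"
      by (rule dec_ball[OF finS]) (rule dec_ES_ge[OF esTk])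
    have d2: "decided (\<lambda>k. \<forall>x\<in>V. (\<Sum>y\<in>V. R S k x y) - \<mu>s k x = 0)"
    proof (rule dec_ball[OF fin])
      fix x assume "x \<in> V"
      show "decided (\<lambda>k. (\<Sum>y\<in>V. R S k x y) - \<mu>s k x = 0)"
        by (rule dec_ES_eq, rule ES_diff, rule ES_sum[OF fin], rule esR, rule es\<mu>) fact
    qed
    have d3: "decided (\<lambda>k. \<forall>y\<in>V. (\<Sum>x\<in>V. R S k x y) - \<nu>s k y = 0)"
    proof (rule dec_ball[OF fin])
      fix y assume "y \<in> V"
      show "decided (\<lambda>k. (\<Sum>x\<in>V. R S k x y) - \<nu>s k y = 0)"
        by (rule dec_ES_eq, rule ES_diff, rule ES_sum[OF fin], rule esR, rule es\<nu>) fact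
    qed
    have "decided (\<lambda>k. (\<forall>p\<in>S. Tk S k (fst p) (snd p) \<ge> 0) \<and>
      ((\<forall>x\<in>V. (\<Sum>y\<in>V. R S k x y) - \<mu>s k x = 0) \<and> (\<forall>y\<in>V. (\<Sum>x\<in>V. R S k x y) - \<nu>s k y = 0)))"
      by (intro dec_conj d1 d2 d3)
    then show ?thesis unfolding PS_def[abs_def] .
  qed
  have decF: "decided (feasS S)" if S: "S \<in> SS" for S
  proof -
    have "feasS S = PS S" using K2[OF S] by (rule ext)
    then show ?thesis using decPS[OF S] by simp
  qed
  define F0 where "F0 = {S\<in>SS. eventually (feasS S) sequentially}"
  have finF0: "finite F0" unfolding F0_def using finSS by simp
  have evF: "eventually (\<lambda>k. \<forall>S\<in>SS. feasS S k = (S \<in> F0)) sequentially"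
  proof (rule eventually_ball_finite[OF finSS], rule ballI)
    fix S assume S: "S \<in> SS"
    show "eventually (\<lambda>k. feasS S k = (S \<in> F0)) sequentially"
    proof (cases "S \<in> F0")
      case True
      then have "eventually (feasS S) sequentially" unfolding F0_def by blast
      then show ?thesis by eventually_elim (simp add: True)
    next
      case False
      then have "\<not> eventually (feasS S) sequentially" unfolding F0_def using S by blast
      then have "eventually (\<lambda>k. \<not> feasS S k) sequentially" using decF[OF S] unfolding decided_def by blast
      then show ?thesis by eventually_elim (simp add: False)
    qed
  qed
  then obtain N where N: "\<And>k. k \<ge> N \<Longrightarrow> \<forall>S\<in>SS. feasS S k = (S \<in> F0)"
    unfolding eventually_sequentially by blast
  have basic: "\<exists>S\<in>SS. feasS S k \<and> val S k \<le> tcost V c T" if cT: "coupling V (\<mu>s k) (\<nu>s k) T" for k T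
  proof -
    obtain T' S where r: "coupling V (\<mu>s k) (\<nu>s k) T'" "S \<subseteq> V \<times> V" "supp_in S T'" "indep V S"
      "tcost V c T' \<le> tcost V c T"
      using basic_reduce[OF fin cT] by blast
    have S: "S \<in> SS" unfolding SS_def using r by blast
    have "feasS S k" unfolding feasS_def using r by blast
    moreover have "val S k = tcost V c T'" using K3[OF S r(1) r(3)] by simp
    ultimately show ?thesis using S r(5) by auto
  qed
  have neF0: "F0 \<noteq> {}"
  proof -
    obtain T where "coupling V (\<mu>s N) (\<nu>s N) T" using feas by blast
    then obtain S where "S \<in> SS" "feasS S N" using basic by blast
    then have "S \<in> F0" using N[of N] by blast
    then show ?thesis by blast
  qed
  have main: "Inf {tcost V c T | T. coupling V (\<mu>s k) (\<nu>s k) T} = Min ((\<lambda>S. val S k) ` F0)"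
    if k: "k \<ge> N" for k
  proof (rule cInf_eq_minimum)
    have Nk: "\<forall>S\<in>SS. feasS S k = (S \<in> F0)" using N[OF k] .
    have "Min ((\<lambda>S. val S k) ` F0) \<in> (\<lambda>S. val S k) ` F0" using finF0 neF0 by simp
    then obtain S0 where S0: "S0 \<in> F0" and m: "Min ((\<lambda>S. val S k) ` F0) = val S0 k" by blast
    have S0SS: "S0 \<in> SS" using S0 unfolding F0_def by blast
    have "feasS S0 k" using Nk S0 S0SS by blast
    then obtain T where cT: "coupling V (\<mu>s k) (\<nu>s k) T" and sT: "supp_in S0 T" unfolding feasS_def by blast
    have "tcost V c T = val S0 k" by (rule K3[OF S0SS cT sT])
    then show "Min ((\<lambda>S. val S k) ` F0) \<in> {tcost V c T | T. coupling V (\<mu>s k) (\<nu>s k) T}"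
      using cT m by force
  next
    fix a assume "a \<in> {tcost V c T | T. coupling V (\<mu>s k) (\<nu>s k) T}"
    then obtain T where a: "a = tcost V c T" and cT: "coupling V (\<mu>s k) (\<nu>s k) T" by blast
    obtain S where S: "S \<in> SS" "feasS S k" "val S k \<le> tcost V c T" using basic[OF cT] by blast
    have "S \<in> F0" using N[OF k] S by blast
    then have "Min ((\<lambda>S. val S k) ` F0) \<le> val S k" using finF0 by simp
    then show "Min ((\<lambda>S. val S k) ` F0) \<le> a" using S(3) a by simp
  qed
  have esval: "ES (val S)" for S
  proof (cases "finite S")
    case True
    have "ES (\<lambda>k. \<Sum>p\<in>S. c (fst p) (snd p) * Tk S k (fst p) (snd p))"
      by (rule ES_sum[OF True]) (rule ES_scale[OF esTk])
    then show ?thesis unfolding val_def[abs_def] .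
  next
    case False
    then show ?thesis unfolding val_def[abs_def] using ES_const[of 0] by simp
  qed
  have "ES (\<lambda>k. Min ((\<lambda>S. val S k) ` F0))"
    by (rule ES_Min[OF finF0 neF0 esval])
  moreover have "eventually (\<lambda>k. Min ((\<lambda>S. val S k) ` F0) = Inf {tcost V c T | T. coupling V (\<mu>s k) (\<nu>s k) T}) sequentially"
    unfolding eventually_sequentially by (intro exI[of _ N] allI impI, rule main[symmetric])
  ultimately show ?thesis by (rule ES_cong_ev)
qed




locale symop =
  fixes V :: "'a set" and P :: "'a \<Rightarrow> 'a \<Rightarrow> real" and d :: "'a \<Rightarrow> real"
  assumes finV: "finite V" and dpos: "\<And>x. x \<in> V \<Longrightarrow> d x > 0"
    and sym: "\<And>x y. x \<in> V \<Longrightarrow> y \<in> V \<Longrightarrow> d x * P x y = d y * P y x"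
begin

definition Top :: "('a \<Rightarrow> complex) \<Rightarrow> 'a \<Rightarrow> complex" where
  "Top f = (\<lambda>y. if y \<in> V then (\<Sum>x\<in>V. f x * complex_of_real (P x y)) else 0)"

definition supp :: "('a \<Rightarrow> complex) \<Rightarrow> bool" where
  "supp f \<longleftrightarrow> (\<forall>y. y \<notin> V \<longrightarrow> f y = 0)"

definition sh :: "complex \<Rightarrow> ('a \<Rightarrow> complex) \<Rightarrow> 'a \<Rightarrow> complex" where
  "sh e f = (\<lambda>y. Top f y - e * f y)"

definition ip :: "('a \<Rightarrow> complex) \<Rightarrow> ('a \<Rightarrow> complex) \<Rightarrow> complex" where
  "ip f g = (\<Sum>y\<in>V. cnj (f y) * g y / complex_of_real (d y))"

fun prodop :: "complex list \<Rightarrow> ('a \<Rightarrow> complex) \<Rightarrow> 'a \<Rightarrow> complex" where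
  "prodop [] f = f"
| "prodop (e # es) f = sh e (prodop es f)"

lemma Top_add: "Top (\<lambda>y. f y + g y) = (\<lambda>y. Top f y + Top g y)"
  unfolding Top_def by (rule ext) (simp add: distrib_right sum.distrib)

lemma Top_diff: "Top (\<lambda>y. f y - g y) = (\<lambda>y. Top f y - Top g y)"
  unfolding Top_def by (rule ext) (simp add: left_diff_distrib sum_subtractf)

lemma Top_scale: "Top (\<lambda>y. c * f y) = (\<lambda>y. c * Top f y)"
  unfolding Top_def by (rule ext) (simp add: sum_distrib_left mult.assoc)

lemma Top_zero: "Top (\<lambda>y. 0) = (\<lambda>y. 0)"
  unfolding Top_def by (rule ext) simp

lemma Top_sum: "Top (\<lambda>y. \<Sum>i\<in>I. F i y) = (\<lambda>y. \<Sum>i\<in>I. Top (F i) y)"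
proof (cases "finite I")
  case True
  then show ?thesis
  proof (induction I rule: finite_induct)
    case empty
    then show ?case using Top_zero by simp
  next
    case (insert x I)
    have "Top (\<lambda>y. \<Sum>i\<in>insert x I. F i y) = Top (\<lambda>y. F x y + (\<Sum>i\<in>I. F i y))"
      using insert(1,2) by simp
    also have "\<dots> = (\<lambda>y. Top (F x) y + Top (\<lambda>y. \<Sum>i\<in>I. F i y) y)" by (rule Top_add)
    also have "\<dots> = (\<lambda>y. Top (F x) y + (\<Sum>i\<in>I. Top (F i) y))" using insert(3) by simp
    also have "\<dots> = (\<lambda>y. \<Sum>i\<in>insert x I. Top (F i) y)" using insert(1,2) by simp
    finally show ?case .
  qed
next
  case False
  then show ?thesis using Top_zero by simp
qed

lemma supp_Top: "supp (Top f)"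
  unfolding supp_def Top_def by simp

lemma supp_sh: "supp f \<Longrightarrow> supp (sh e f)"
  unfolding supp_def sh_def Top_def by simp

lemma supp_prodop: "supp f \<Longrightarrow> supp (prodop es f)"
  by (induction es) (simp_all add: supp_sh)

lemma sh_commute: "sh a (sh b f) = sh b (sh a f)"
proof -
  have "sh a (sh b f) = (\<lambda>y. Top (Top f) y - b * Top f y - a * Top f y + a * b * f y)"
    unfolding sh_def Top_diff Top_scale by (rule ext) (simp add: algebra_simps)
  also have "\<dots> = (\<lambda>y. Top (Top f) y - a * Top f y - b * Top f y + b * a * f y)"
    by (rule ext) (simp add: algebra_simps)
  also have "\<dots> = sh b (sh a f)"
    unfolding sh_def Top_diff Top_scale by (rule ext) (simp add: algebra_simps)
  finally show ?thesis .
qed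

lemma prodop_sh: "prodop es (sh e f) = sh e (prodop es f)"
proof (induction es)
  case Nil then show ?case by simp
next
  case (Cons a es)
  have "prodop (a # es) (sh e f) = sh a (sh e (prodop es f))" using Cons by simp
  also have "\<dots> = sh e (sh a (prodop es f))" by (rule sh_commute)
  finally show ?case by simp
qed

lemma prodop_remove: "e \<in> set D \<Longrightarrow> prodop D f = sh e (prodop (remove1 e D) f)"
proof (induction D)
  case Nil then show ?case by simp
next
  case (Cons a D)
  show ?case
  proof (cases "a = e")
    case True then show ?thesis by simp
  next
    case False
    then have eD: "e \<in> set D" using Cons.prems by simp
    have "prodop (a # D) f = sh a (sh e (prodop (remove1 e D) f))" using Cons.IH[OF eD] by simp
    also have "\<dots> = sh e (sh a (prodop (remove1 e D) f))" by (rule sh_commute)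
    finally show ?thesis using False by simp
  qed
qed

lemma ip_Top: "ip (Top f) g = ip f (Top g)"
proof -
  have "ip (Top f) g = (\<Sum>y\<in>V. \<Sum>x\<in>V. cnj (f x) * g y * complex_of_real (P x y / d y))"
    unfolding ip_def
  proof (intro sum.cong refl)
    fix y assume y: "y \<in> V"
    have "cnj (Top f y) * g y / complex_of_real (d y) = (\<Sum>x\<in>V. cnj (f x * complex_of_real (P x y))) * g y / complex_of_real (d y)"
      unfolding Top_def using y by (simp add: cnj_sum)
    also have "\<dots> = (\<Sum>x\<in>V. cnj (f x * complex_of_real (P x y)) * g y / complex_of_real (d y))"
      unfolding sum_distrib_right sum_divide_distrib ..
    also have "\<dots> = (\<Sum>x\<in>V. cnj (f x) * g y * complex_of_real (P x y / d y))"
      by (intro sum.cong refl) simp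
    finally show "cnj (Top f y) * g y / complex_of_real (d y) = (\<Sum>x\<in>V. cnj (f x) * g y * complex_of_real (P x y / d y))" .
  qed
  also have "\<dots> = (\<Sum>x\<in>V. \<Sum>y\<in>V. cnj (f x) * g y * complex_of_real (P x y / d y))"
    by (rule sum.swap)
  also have "\<dots> = (\<Sum>x\<in>V. \<Sum>y\<in>V. cnj (f x) * g y * complex_of_real (P y x / d x))"
  proof (intro sum.cong refl)
    fix x y assume x: "x \<in> V" and y: "y \<in> V"
    have "P x y / d y = P y x / d x"
      using sym[OF x y] dpos[OF x] dpos[OF y] by (simp add: field_simps)
    then show "cnj (f x) * g y * complex_of_real (P x y / d y) = cnj (f x) * g y * complex_of_real (P y x / d x)"
      by simp
  qed
  also have "\<dots> = ip f (Top g)"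
    unfolding ip_def
  proof (intro sum.cong refl)
    fix x assume x: "x \<in> V"
    have "cnj (f x) * Top g x / complex_of_real (d x) = cnj (f x) * (\<Sum>y\<in>V. g y * complex_of_real (P y x)) / complex_of_real (d x)"
      unfolding Top_def using x by simp
    also have "\<dots> = (\<Sum>y\<in>V. cnj (f x) * (g y * complex_of_real (P y x)) / complex_of_real (d x))"
      unfolding sum_distrib_left sum_divide_distrib ..
    also have "\<dots> = (\<Sum>y\<in>V. cnj (f x) * g y * complex_of_real (P y x / d x))"
      by (intro sum.cong refl) simp
    finally show "(\<Sum>y\<in>V. cnj (f x) * g y * complex_of_real (P y x / d x)) = cnj (f x) * Top g x / complex_of_real (d x)" by simp
  qed
  finally show ?thesis .
qed

lemma ip_scale_right: "ip f (\<lambda>y. c * g y) = c * ip f g"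
  unfolding ip_def by (simp add: sum_distrib_left algebra_simps)

lemma ip_scale_left: "ip (\<lambda>y. c * f y) g = cnj c * ip f g"
  unfolding ip_def by (simp add: sum_distrib_left algebra_simps)

lemma ip_diff_left: "ip (\<lambda>y. f y - g y) h = ip f h - ip g h"
  unfolding ip_def by (simp add: sum_subtractf algebra_simps diff_divide_distrib)

lemma ip_diff_right: "ip f (\<lambda>y. g y - h y) = ip f g - ip f h"
  unfolding ip_def by (simp add: sum_subtractf algebra_simps diff_divide_distrib)

lemma ip_zero_right: "ip f (\<lambda>y. 0) = 0"
  unfolding ip_def by simp

lemma ip_self: "ip f f = complex_of_real (\<Sum>y\<in>V. (cmod (f y))\<^sup>2 / d y)"
  unfolding ip_def of_real_sum
proof (intro sum.cong refl)
  fix y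
  have "cnj (f y) * f y = complex_of_real ((cmod (f y))\<^sup>2)"
    by (metis complex_norm_square mult.commute)
  then show "cnj (f y) * f y / complex_of_real (d y) = complex_of_real ((cmod (f y))\<^sup>2 / d y)"
    by simp
qed

lemma ip_self_zero:
  assumes "supp f" "ip f f = 0"
  shows "f = (\<lambda>y. 0)"
proof (rule ext)
  fix y
  have "complex_of_real (\<Sum>y\<in>V. (cmod (f y))\<^sup>2 / d y) = 0" using assms(2) by (simp only: ip_self)
  then have s0: "(\<Sum>y\<in>V. (cmod (f y))\<^sup>2 / d y) = 0" by (simp only: of_real_eq_0_iff)
  have nn: "\<forall>y\<in>V. 0 \<le> (cmod (f y))\<^sup>2 / d y" using dpos by (simp add: less_imp_le)
  have "\<forall>y\<in>V. (cmod (f y))\<^sup>2 / d y = 0" using s0 nn finV by (simp add: sum_nonneg_eq_0_iff)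
  then have "\<forall>y\<in>V. f y = 0" using dpos by (metis divide_eq_0_iff norm_eq_zero zero_less_power2 less_irrefl)
  then show "f y = 0" using assms(1) unfolding supp_def by (cases "y \<in> V") auto
qed

lemma nonreal_inj:
  assumes "cnj e \<noteq> e" "supp h" "sh e h = (\<lambda>y. 0)"
  shows "h = (\<lambda>y. 0)"
proof (rule ccontr)
  assume hne: "h \<noteq> (\<lambda>y. 0)"
  have Th: "Top h = (\<lambda>y. e * h y)"
    using assms(3) unfolding sh_def by (simp add: fun_eq_iff)
  have "ip h (Top h) = e * ip h h" unfolding Th by (rule ip_scale_right)
  moreover have "ip (Top h) h = cnj e * ip h h" unfolding Th by (rule ip_scale_left)
  ultimately have "e * ip h h = cnj e * ip h h" using ip_Top[of h h] by simp
  moreover have "ip h h \<noteq> 0" using ip_self_zero[OF assms(2)] hne by blast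
  ultimately have "e = cnj e" by simp
  then show False using assms(1) by simp
qed

lemma real_sq:
  assumes "cnj e = e" "supp h" "sh e (sh e h) = (\<lambda>y. 0)"
  shows "sh e h = (\<lambda>y. 0)"
proof -
  define u where "u = sh e h"
  have su: "supp u" unfolding u_def using assms(2) by (rule supp_sh)
  have "ip u u = ip (\<lambda>y. Top h y - e * h y) u" unfolding u_def sh_def ..
  also have "\<dots> = ip (Top h) u - cnj e * ip h u" by (simp add: ip_diff_left ip_scale_left)
  also have "\<dots> = ip h (Top u) - e * ip h u" using assms(1) by (simp add: ip_Top)
  also have "\<dots> = ip h (\<lambda>y. Top u y - e * u y)" by (simp add: ip_diff_right ip_scale_right)
  also have "\<dots> = ip h (sh e u)" unfolding sh_def ..
  also have "\<dots> = 0" using assms(3) unfolding u_def by (simp add: ip_zero_right)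
  finally show ?thesis using ip_self_zero[OF su] unfolding u_def by simp
qed

lemma prodop_real_distinct:
  "supp g \<Longrightarrow> prodop es g = (\<lambda>y. 0) \<Longrightarrow>
    \<exists>D. distinct D \<and> (\<forall>e\<in>set D. cnj e = e) \<and> prodop D g = (\<lambda>y. 0)"
proof (induction es arbitrary: g)
  case Nil
  then show ?case by (intro exI[of _ "[]"]) simp
next
  case (Cons e es)
  have sg: "supp (sh e g)" using Cons.prems(1) by (rule supp_sh)
  have "prodop es (sh e g) = (\<lambda>y. 0)" using Cons.prems(2) by (simp add: prodop_sh)
  then obtain D' where D': "distinct D'" "\<forall>e\<in>set D'. cnj e = e" "prodop D' (sh e g) = (\<lambda>y. 0)"
    using Cons.IH[OF sg] by blast
  have hz: "sh e (prodop D' g) = (\<lambda>y. 0)" using D'(3) by (simp add: prodop_sh)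
  have sh': "supp (prodop D' g)" using Cons.prems(1) by (rule supp_prodop)
  show ?case
  proof (cases "cnj e = e")
    case False
    have "prodop D' g = (\<lambda>y. 0)" using nonreal_inj[OF False sh' hz] .
    then show ?thesis using D' by blast
  next
    case True
    show ?thesis
    proof (cases "e \<in> set D'")
      case True2: True
      define h' where "h' = prodop (remove1 e D') g"
      have sh'': "supp h'" unfolding h'_def using Cons.prems(1) by (rule supp_prodop)
      have pe: "prodop D' g = sh e h'" unfolding h'_def by (rule prodop_remove[OF True2])
      have "sh e (sh e h') = (\<lambda>y. 0)" using hz unfolding pe .
      then have "sh e h' = (\<lambda>y. 0)" by (rule real_sq[OF True sh''])
      then have "prodop D' g = (\<lambda>y. 0)" unfolding pe .
      then show ?thesis using D' by blast
    next
      case False2: False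
      have "distinct (e # D')" using D'(1) False2 by simp
      moreover have "\<forall>x\<in>set (e # D'). cnj x = x" using D'(2) True by simp
      moreover have "prodop (e # D') g = (\<lambda>y. 0)" using hz by simp
      ultimately show ?thesis by blast
    qed
  qed
qed


lemma eigen_decomp:
  "distinct D \<Longrightarrow> supp g \<Longrightarrow> prodop D g = (\<lambda>y. 0) \<Longrightarrow>
    \<exists>G. (\<forall>e\<in>set D. supp (G e) \<and> Top (G e) = (\<lambda>y. e * G e y)) \<and> g = (\<lambda>y. \<Sum>e\<in>set D. G e y)"
proof (induction D arbitrary: g)
  case Nil
  then show ?case by simp
next
  case (Cons e D)
  have eD: "e \<notin> set D" and dD: "distinct D" using Cons.prems(1) by auto
  have sg: "supp (sh e g)" using Cons.prems(2) by (rule supp_sh)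
  have "prodop D (sh e g) = (\<lambda>y. 0)" using Cons.prems(3) by (simp add: prodop_sh)
  then obtain H where H: "\<forall>e'\<in>set D. supp (H e') \<and> Top (H e') = (\<lambda>y. e' * H e' y)"
    and hsum: "sh e g = (\<lambda>y. \<Sum>e'\<in>set D. H e' y)"
    using Cons.IH[OF dD sg] by blast
  define G where "G x = (if x = e then (\<lambda>y. g y - (\<Sum>e'\<in>set D. inverse (e' - e) * H e' y))
                                 else (\<lambda>y. inverse (x - e) * H x y))" for x
  have Ge: "G e = (\<lambda>y. g y - (\<Sum>e'\<in>set D. inverse (e' - e) * H e' y))" unfolding G_def by simp
  have GD: "G x = (\<lambda>y. inverse (x - e) * H x y)" if "x \<in> set D" for x
    unfolding G_def using that eD by auto
  have eig_D: "supp (G x) \<and> Top (G x) = (\<lambda>y. x * G x y)" if x: "x \<in> set D" for x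
  proof
    show "supp (G x)" unfolding GD[OF x] using H x unfolding supp_def by simp
    have "Top (G x) = (\<lambda>y. inverse (x - e) * Top (H x) y)" unfolding GD[OF x] by (rule Top_scale)
    also have "\<dots> = (\<lambda>y. inverse (x - e) * (x * H x y))" using H x by simp
    also have "\<dots> = (\<lambda>y. x * G x y)" unfolding GD[OF x] by (simp add: algebra_simps)
    finally show "Top (G x) = (\<lambda>y. x * G x y)" .
  qed
  have eig_e: "supp (G e) \<and> Top (G e) = (\<lambda>y. e * G e y)"
  proof
    show "supp (G e)" unfolding Ge using H Cons.prems(2) unfolding supp_def by simp
    have T1: "Top (\<lambda>y. \<Sum>e'\<in>set D. inverse (e' - e) * H e' y) = (\<lambda>y. \<Sum>e'\<in>set D. inverse (e' - e) * (e' * H e' y))"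
    proof -
      have "Top (\<lambda>y. \<Sum>e'\<in>set D. inverse (e' - e) * H e' y) = (\<lambda>y. \<Sum>e'\<in>set D. Top (\<lambda>y. inverse (e' - e) * H e' y) y)"
        by (rule Top_sum)
      also have "\<dots> = (\<lambda>y. \<Sum>e'\<in>set D. inverse (e' - e) * (e' * H e' y))"
      proof (rule ext, intro sum.cong refl)
        fix y e' assume "e' \<in> set D"
        then show "Top (\<lambda>y. inverse (e' - e) * H e' y) y = inverse (e' - e) * (e' * H e' y)"
          using H unfolding Top_scale by simp
      qed
      finally show ?thesis .
    qed
    have "Top (G e) = (\<lambda>y. Top g y - (\<Sum>e'\<in>set D. inverse (e' - e) * (e' * H e' y)))"
      unfolding Ge Top_diff T1 ..
    also have "\<dots> = (\<lambda>y. e * G e y)"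
    proof (rule ext)
      fix y
      have hy: "Top g y - e * g y = (\<Sum>e'\<in>set D. H e' y)" using fun_cong[OF hsum, of y] unfolding sh_def by simp
      have "(\<Sum>e'\<in>set D. inverse (e' - e) * (e' * H e' y)) - e * (\<Sum>e'\<in>set D. inverse (e' - e) * H e' y)
            = (\<Sum>e'\<in>set D. inverse (e' - e) * (e' - e) * H e' y)"
        by (simp add: sum_distrib_left sum_subtractf[symmetric] algebra_simps)
      also have "\<dots> = (\<Sum>e'\<in>set D. H e' y)"
      proof (intro sum.cong refl)
        fix e' assume "e' \<in> set D"
        then have "e' - e \<noteq> 0" using eD by auto
        then show "inverse (e' - e) * (e' - e) * H e' y = H e' y" by simp
      qed
      finally have eq: "(\<Sum>e'\<in>set D. inverse (e' - e) * (e' * H e' y)) - e * (\<Sum>e'\<in>set D. inverse (e' - e) * H e' y)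
            = (\<Sum>e'\<in>set D. H e' y)" .
      show "Top g y - (\<Sum>e'\<in>set D. inverse (e' - e) * (e' * H e' y)) = e * G e y"
        unfolding Ge using hy eq by (simp add: algebra_simps)
    qed
    finally show "Top (G e) = (\<lambda>y. e * G e y)" .
  qed
  have gsum: "g = (\<lambda>y. \<Sum>x\<in>set (e # D). G x y)"
  proof (rule ext)
    fix y
    have "(\<Sum>x\<in>set (e # D). G x y) = G e y + (\<Sum>x\<in>set D. G x y)" using eD by simp
    also have "(\<Sum>x\<in>set D. G x y) = (\<Sum>x\<in>set D. inverse (x - e) * H x y)"
      by (intro sum.cong refl) (simp add: GD)
    finally show "g y = (\<Sum>x\<in>set (e # D). G x y)" unfolding Ge by simp
  qed
  have "\<forall>x\<in>set (e # D). supp (G x) \<and> Top (G x) = (\<lambda>y. x * G x y)" using eig_D eig_e by simp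
  then show ?case using gsum by blast
qed

lemma Top_pow_eig:
  assumes "\<forall>e\<in>S. Top (G e) = (\<lambda>y. e * G e y)"
  shows "(Top ^^ k) (\<lambda>y. \<Sum>e\<in>S. G e y) = (\<lambda>y. \<Sum>e\<in>S. e ^ k * G e y)"
proof (induction k)
  case 0 then show ?case by simp
next
  case (Suc k)
  have "(Top ^^ Suc k) (\<lambda>y. \<Sum>e\<in>S. G e y) = Top (\<lambda>y. \<Sum>e\<in>S. e ^ k * G e y)" using Suc by simp
  also have "\<dots> = (\<lambda>y. \<Sum>e\<in>S. Top (\<lambda>y. e ^ k * G e y) y)" by (rule Top_sum)
  also have "\<dots> = (\<lambda>y. \<Sum>e\<in>S. e ^ Suc k * G e y)"
  proof (rule ext, intro sum.cong refl)
    fix y e assume "e \<in> S"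
    then show "Top (\<lambda>y. e ^ k * G e y) y = e ^ Suc k * G e y"
      using assms unfolding Top_scale by simp
  qed
  finally show ?case .
qed

lemma Top_pow_expsum:
  assumes sg: "supp g" and an: "prodop es g = (\<lambda>y. 0)"
  shows "\<exists>D::real set. finite D \<and> (\<exists>C. \<forall>k y. (Top ^^ k) g y = (\<Sum>r\<in>D. complex_of_real r ^ k * C r y))"
proof -
  obtain D where D: "distinct D" "\<forall>e\<in>set D. cnj e = e" "prodop D g = (\<lambda>y. 0)"
    using prodop_real_distinct[OF sg an] by blast
  obtain G where G: "\<forall>e\<in>set D. supp (G e) \<and> Top (G e) = (\<lambda>y. e * G e y)" and gs: "g = (\<lambda>y. \<Sum>e\<in>set D. G e y)"
    using eigen_decomp[OF D(1) sg D(3)] by blast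
  have re: "complex_of_real (Re e) = e" if "e \<in> set D" for e
    using D(2) that by (simp add: Reals_cnj_iff[symmetric])
  have inj: "inj_on Re (set D)"
  proof (rule inj_onI)
    fix a b assume "a \<in> set D" "b \<in> set D" "Re a = Re b"
    then show "a = b" using re by metis
  qed
  define C where "C r = G (complex_of_real r)" for r
  have "(Top ^^ k) g y = (\<Sum>r\<in>Re ` set D. complex_of_real r ^ k * C r y)" for k y
  proof -
    have "(Top ^^ k) g y = (\<Sum>e\<in>set D. e ^ k * G e y)"
      using Top_pow_eig[of "set D" G k] G unfolding gs[symmetric] by simp
    also have "\<dots> = (\<Sum>e\<in>set D. complex_of_real (Re e) ^ k * C (Re e) y)"
      unfolding C_def by (intro sum.cong refl) (simp add: re)
    also have "\<dots> = (\<Sum>r\<in>Re ` set D. complex_of_real r ^ k * C r y)"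
      using sum.reindex[OF inj, of "\<lambda>r. complex_of_real r ^ k * C r y"] by simp
    finally show ?thesis .
  qed
  then show ?thesis by (intro exI[of _ "Re ` set D"] conjI) (simp, blast)
qed


fun peval_list :: "complex list \<Rightarrow> ('a \<Rightarrow> complex) \<Rightarrow> 'a \<Rightarrow> complex" where
  "peval_list [] f = (\<lambda>y. 0)"
| "peval_list (a # as) f = (\<lambda>y. a * f y + Top (peval_list as f) y)"

definition peval :: "complex poly \<Rightarrow> ('a \<Rightarrow> complex) \<Rightarrow> 'a \<Rightarrow> complex" where
  "peval p f = peval_list (coeffs p) f"

lemma peval_0: "peval 0 f = (\<lambda>y. 0)"
  unfolding peval_def by simp

lemma peval_pCons: "peval (pCons a p) f = (\<lambda>y. a * f y + Top (peval p f) y)"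
proof (cases "p = 0 \<and> a = 0")
  case True
  then show ?thesis unfolding peval_def using Top_zero by (simp add: fun_eq_iff)
next
  case False
  then have "coeffs (pCons a p) = a # coeffs p" by (auto simp: cCons_def)
  then show ?thesis unfolding peval_def by simp
qed

lemma peval_add: "peval (p + q) f = (\<lambda>y. peval p f y + peval q f y)"
proof (induction p q rule: poly_induct2)
  case 0 then show ?case by (simp add: peval_0)
next
  case (pCons a p b q)
  show ?case unfolding add_pCons peval_pCons pCons Top_add by (simp add: fun_eq_iff algebra_simps)
qed

lemma peval_smult: "peval (smult c p) f = (\<lambda>y. c * peval p f y)"
proof (induction p)
  case 0 then show ?case by (simp add: peval_0)
next
  case (pCons a p)
  show ?case unfolding smult_pCons peval_pCons pCons.IH Top_scale by (simp add: fun_eq_iff algebra_simps)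
qed

lemma peval_mult: "peval (p * q) f = peval p (peval q f)"
proof (induction p)
  case 0 then show ?case by (simp add: peval_0)
next
  case (pCons a p)
  show ?case unfolding mult_pCons_left peval_add peval_smult peval_pCons pCons.IH
    by (simp add: fun_eq_iff Top_zero)
qed

lemma peval_lin: "peval [:-r, 1:] f = sh r f"
  unfolding peval_pCons peval_0 Top_zero sh_def by (simp add: fun_eq_iff)

lemma peval_monom: "peval (monom c n) f = (\<lambda>y. c * (Top ^^ n) f y)"
proof (induction n)
  case 0 then show ?case unfolding monom_0 peval_pCons peval_0 Top_zero by simp
next
  case (Suc n)
  show ?case unfolding monom_Suc peval_pCons Suc Top_scale by simp
qed

lemma peval_sum: "peval (\<Sum>i\<in>I. p i) f = (\<lambda>y. \<Sum>i\<in>I. peval (p i) f y)"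
proof (cases "finite I")
  case True
  then show ?thesis
    by (induction I rule: finite_induct) (simp_all add: peval_0 peval_add)
next
  case False then show ?thesis by (simp add: peval_0)
qed

lemma peval_prod_lin: "peval (\<Prod>i<m. [:- r i, 1:]) f = prodop (rev (map r [0..<m])) f"
proof (induction m arbitrary: f)
  case 0
  have "peval 1 f = f" unfolding one_pCons peval_pCons peval_0 Top_zero by simp
  then show ?case by simp
next
  case (Suc m)
  have "peval (\<Prod>i<Suc m. [:- r i, 1:]) f = peval ((\<Prod>i<m. [:- r i, 1:]) * [:- r m, 1:]) f"
    by simp
  also have "\<dots> = prodop (rev (map r [0..<m])) (sh (r m) f)"
    unfolding peval_mult peval_lin Suc ..
  also have "\<dots> = sh (r m) (prodop (rev (map r [0..<m])) f)" by (rule prodop_sh)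
  finally show ?case by simp
qed

lemma annih_of_poly:
  assumes "p \<noteq> 0" "peval p g = (\<lambda>y. 0)"
  shows "\<exists>es. prodop es g = (\<lambda>y. 0)"
proof -
  obtain root where p0: "smult (lead_coeff p) (\<Prod>i<degree p. [:-root i, 1:]) = p"
    using complex_poly_decompose' by blast
  define c where "c = lead_coeff p"
  define n where "n = degree p"
  have p: "smult c (\<Prod>i<n. [:-root i, 1:]) = p" using p0 unfolding c_def n_def .
  have "peval (smult c (\<Prod>i<n. [:-root i, 1:])) g = (\<lambda>y. c * prodop (rev (map root [0..<n])) g y)"
    unfolding peval_smult peval_prod_lin ..
  then have "peval p g = (\<lambda>y. c * prodop (rev (map root [0..<n])) g y)" unfolding p .
  then have "\<forall>y. c * prodop (rev (map root [0..<n])) g y = 0"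
    using assms(2) by (simp add: fun_eq_iff)
  moreover have "c \<noteq> 0" unfolding c_def using assms(1) by simp
  ultimately have "prodop (rev (map root [0..<n])) g = (\<lambda>y. 0)" by (simp add: fun_eq_iff)
  then show ?thesis by blast
qed


lemma sum_fun_apply_c: "(sum F A) x = (\<Sum>a\<in>A. F a x)" for F :: "'i \<Rightarrow> 'b \<Rightarrow> complex"
  by (induction A rule: infinite_finite_induct) simp_all

lemma supp_pow: "supp g \<Longrightarrow> supp ((Top ^^ i) g)"
  by (induction i) (simp_all add: supp_Top)

lemma exists_annih_poly:
  assumes sg: "supp g"
  shows "\<exists>p. p \<noteq> 0 \<and> peval p g = (\<lambda>y. 0)"
proof -
  define n where "n = card V"
  define K where "K i = (Top ^^ i) g" for i
  show ?thesis
  proof (cases "inj_on K {..n}")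
    case False
    then obtain i j where ij: "i \<noteq> j" "K i = K j" unfolding inj_on_def by blast
    define p where "p = monom 1 j + smult (-1) (monom (1::complex) i)"
    have "coeff p j = 1" unfolding p_def using ij(1) by simp
    then have "p \<noteq> 0" by auto
    moreover have "peval p g = (\<lambda>y. 0)"
      unfolding p_def peval_add peval_smult peval_monom using ij(2) unfolding K_def by simp
    ultimately show ?thesis by blast
  next
    case True
    define sc where "sc = (\<lambda>(c::complex) (f::'a\<Rightarrow>complex) y. c * f y)"
    interpret cvs: vector_space sc
      unfolding sc_def Vector_Spaces.vector_space_def by (simp add: fun_eq_iff algebra_simps)
    define del where "del v = (\<lambda>y::'a. if y = v then (1::complex) else 0)" for v :: 'a
    define DS where "DS = del ` V"
    define KS where "KS = K ` {..n}"
    have cardKS: "card KS = Suc n" unfolding KS_def using card_image[OF True] by simp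
    have cardDS: "card DS \<le> n" unfolding DS_def n_def by (rule card_image_le[OF finV])
    have finDS: "finite DS" unfolding DS_def using finV by simp
    have in_span: "f \<in> cvs.span DS" if sf: "supp f" for f
    proof -
      have "f = (\<Sum>v\<in>V. sc (f v) (del v))"
      proof (rule ext)
        fix y
        have "(\<Sum>v\<in>V. sc (f v) (del v)) y = (\<Sum>v\<in>V. if v = y then f y else 0)"
          unfolding sum_fun_apply_c sc_def del_def by (intro sum.cong refl) auto
        also have "\<dots> = (if y \<in> V then f y else 0)" using finV by (simp add: sum.delta)
        also have "\<dots> = f y" using sf unfolding supp_def by auto
        finally show "f y = (\<Sum>v\<in>V. sc (f v) (del v)) y" by simp
      qed
      also have "\<dots> \<in> cvs.span DS"
        by (intro cvs.span_sum cvs.span_scale cvs.span_base) (simp add: DS_def)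
      finally show ?thesis .
    qed
    have KSsub: "KS \<subseteq> cvs.span DS"
      unfolding KS_def K_def using in_span supp_pow[OF sg] by blast
    have "cvs.dependent KS"
    proof (rule ccontr)
      assume "\<not> cvs.dependent KS"
      then have "card KS \<le> card DS" using cvs.independent_span_bound[OF finDS _ KSsub] by blast
      then show False using cardKS cardDS by simp
    qed
    then obtain t u where t: "finite t" "t \<subseteq> KS" "(\<Sum>v\<in>t. sc (u v) v) = 0" and v0: "\<exists>v\<in>t. u v \<noteq> 0"
      unfolding cvs.dependent_explicit by blast
    define c where "c i = (if K i \<in> t then u (K i) else 0)" for i
    define p where "p = (\<Sum>i\<le>n. monom (c i) i)"
    have "peval p g = (\<lambda>y. \<Sum>i\<le>n. c i * K i y)"
      unfolding p_def peval_sum peval_monom K_def ..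
    also have "\<dots> = (\<lambda>y. 0)"
    proof (rule ext)
      fix y
      have "(\<Sum>i\<le>n. c i * K i y) = (\<Sum>i\<le>n. if i \<in> {i. K i \<in> t} then u (K i) * K i y else 0)"
        unfolding c_def by (intro sum.cong refl) simp
      also have "\<dots> = (\<Sum>i\<in>{..n} \<inter> {i. K i \<in> t}. u (K i) * K i y)"
        by (rule sum.inter_restrict[symmetric]) simp
      also have "\<dots> = (\<Sum>i\<in>{i\<in>{..n}. K i \<in> t}. u (K i) * K i y)"
        by (rule sum.cong) auto
      also have "\<dots> = (\<Sum>v\<in>K ` {i\<in>{..n}. K i \<in> t}. u v * v y)"
        by (rule sum.reindex[symmetric, unfolded comp_def]) (rule inj_on_subset[OF True], blast)
      also have "K ` {i\<in>{..n}. K i \<in> t} = t" using t(2) unfolding KS_def by blast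
      also have "(\<Sum>v\<in>t. u v * v y) = (\<Sum>v\<in>t. sc (u v) v) y"
        unfolding sum_fun_apply_c sc_def ..
      also have "\<dots> = 0" unfolding t(3) by simp
      finally show "(\<Sum>i\<le>n. c i * K i y) = 0" .
    qed
    finally have pe: "peval p g = (\<lambda>y. 0)" .
    obtain v where v: "v \<in> t" "u v \<noteq> 0" using v0 by blast
    then obtain i0 where i0: "i0 \<le> n" "K i0 = v" using t(2) unfolding KS_def by blast
    have "coeff p i0 = c i0" unfolding p_def coeff_sum using i0(1) by (simp add: sum.delta)
    also have "\<dots> \<noteq> 0" unfolding c_def using i0(2) v by simp
    finally have "p \<noteq> 0" by auto
    then show ?thesis using pe by blast
  qed
qed

lemma supp_expsum:
  assumes "supp g"
  shows "\<exists>D::real set. finite D \<and> (\<exists>C. \<forall>k y. (Top ^^ k) g y = (\<Sum>r\<in>D. complex_of_real r ^ k * C r y))"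
proof -
  obtain p where "p \<noteq> 0" "peval p g = (\<lambda>y. 0)" using exists_annih_poly[OF assms] by blast
  then obtain es where "prodop es g = (\<lambda>y. 0)" using annih_of_poly by blast
  then show ?thesis using Top_pow_expsum[OF assms] by blast
qed

end




definition dg :: "('a \<Rightarrow> 'a \<Rightarrow> bool) \<Rightarrow> 'a \<Rightarrow> real" where
  "dg E x = (if deg E x > 0 then real (deg E x) else 1)"

lemma scg_all:
  "simple_connected_graph V E \<Longrightarrow> finite V \<and> V \<noteq> {} \<and> (\<forall>x y. E x y \<longrightarrow> x \<in> V \<and> y \<in> V) \<and>
     (\<forall>x y. E x y \<longrightarrow> E y x) \<and> (\<forall>x. \<not> E x x) \<and> (\<forall>x\<in>V. \<forall>y\<in>V. (x, y) \<in> (edges E)\<^sup>*)"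
  unfolding simple_connected_graph_def by assumption

lemmas scg_parts = scg_all[THEN conjunct1] scg_all[THEN conjunct2, THEN conjunct1]
  scg_all[THEN conjunct2, THEN conjunct2, THEN conjunct1]
  scg_all[THEN conjunct2, THEN conjunct2, THEN conjunct2, THEN conjunct1]
  scg_all[THEN conjunct2, THEN conjunct2, THEN conjunct2, THEN conjunct2, THEN conjunct1]
  scg_all[THEN conjunct2, THEN conjunct2, THEN conjunct2, THEN conjunct2, THEN conjunct2]

lemma scg_edge: "simple_connected_graph V E \<Longrightarrow> E x y \<Longrightarrow> x \<in> V \<and> y \<in> V"
  using scg_parts(3) by metis

lemma scg_sym: "simple_connected_graph V E \<Longrightarrow> E x y \<Longrightarrow> E y x"
  using scg_parts(4) by metis

lemma scg_irrefl: "simple_connected_graph V E \<Longrightarrow> \<not> E x x"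
  using scg_parts(5) by metis

lemma scg_fin: "simple_connected_graph V E \<Longrightarrow> finite V"
  using scg_parts(1) by metis

lemma nbr_sub: "simple_connected_graph V E \<Longrightarrow> {y. E x y} \<subseteq> V"
  using scg_edge by (metis mem_Collect_eq subsetI)

lemma nbr_fin: "simple_connected_graph V E \<Longrightarrow> finite {y. E x y}"
  using nbr_sub scg_fin finite_subset by metis

lemma deg_pos: "simple_connected_graph V E \<Longrightarrow> E x y \<Longrightarrow> deg E x > 0"
  unfolding deg_def using nbr_fin card_gt_0_iff by fastforce

lemma symop_graph:
  assumes g: "simple_connected_graph V E"
  shows "symop V (trans_prob E \<gamma>) (dg E)"
proof
  show "finite V" using g by (rule scg_fin)
  fix x assume "x \<in> V" show "dg E x > 0" unfolding dg_def by simp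
next
  fix x y assume x: "x \<in> V" and y: "y \<in> V"
  show "dg E x * trans_prob E \<gamma> x y = dg E y * trans_prob E \<gamma> y x"
  proof (cases "x = y")
    case True then show ?thesis by simp
  next
    case False
    show ?thesis
    proof (cases "E x y")
      case True
      have Eyx: "E y x" using scg_sym[OF g True] .
      have dx: "deg E x > 0" using deg_pos[OF g True] .
      have dy: "deg E y > 0" using deg_pos[OF g Eyx] .
      show ?thesis unfolding trans_prob_def dg_def using False True Eyx dx dy by simp
    next
      case False2: False
      have "\<not> E y x" using scg_sym[OF g] False2 by blast
      then show ?thesis unfolding trans_prob_def using False False2 by simp
    qed
  qed
qed

lemma walk_Top:
  assumes g: "simple_connected_graph V E" and w: "w \<in> V"
  shows "(\<lambda>y. complex_of_real (walk_dist V E \<gamma> w k y)) =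
    (symop.Top V (trans_prob E \<gamma>) ^^ k) (\<lambda>y. if y = w then 1 else 0)"
proof -
  interpret S: symop V "trans_prob E \<gamma>" "dg E" using g by (rule symop_graph)
  show ?thesis
  proof (induction k)
    case 0
    show ?case by (simp add: fun_eq_iff)
  next
    case (Suc k)
    have "(S.Top ^^ Suc k) (\<lambda>y. if y = w then 1 else 0) = S.Top (\<lambda>y. complex_of_real (walk_dist V E \<gamma> w k y))"
      using Suc by simp
    also have "\<dots> = (\<lambda>y. complex_of_real (walk_dist V E \<gamma> w (Suc k) y))"
    proof (rule ext)
      fix y
      show "S.Top (\<lambda>y. complex_of_real (walk_dist V E \<gamma> w k y)) y = complex_of_real (walk_dist V E \<gamma> w (Suc k) y)"
      proof (cases "y \<in> V")
        case True
        then show ?thesis unfolding S.Top_def by simp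
      next
        case False
        have "trans_prob E \<gamma> x y = 0" if "x \<in> V" for x
        proof -
          have "x \<noteq> y" using that False by blast
          moreover have "\<not> E x y" using scg_edge[OF g] False by blast
          ultimately show ?thesis unfolding trans_prob_def by simp
        qed
        then have "walk_dist V E \<gamma> w (Suc k) y = 0" by simp
        then show ?thesis unfolding S.Top_def using False by simp
      qed
    qed
    finally show ?case by (rule sym)
  qed
qed

lemma walk_expsum:
  assumes g: "simple_connected_graph V E" and w: "w \<in> V"
  shows "\<exists>D::real set. finite D \<and> (\<exists>C. \<forall>k y. walk_dist V E \<gamma> w k y = (\<Sum>r\<in>D. C r y * r ^ k))"
proof -
  interpret S: symop V "trans_prob E \<gamma>" "dg E" using g by (rule symop_graph)
  have sg: "S.supp (\<lambda>y. if y = w then 1 else 0)" unfolding S.supp_def using w by auto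
  obtain D Cc where D: "finite D" and C: "\<And>k y. (S.Top ^^ k) (\<lambda>y. if y = w then 1 else 0) y = (\<Sum>r\<in>D. complex_of_real r ^ k * Cc r y)"
    using S.supp_expsum[OF sg] by blast
  have eq: "walk_dist V E \<gamma> w k y = (\<Sum>r\<in>D. Re (Cc r y) * r ^ k)" for k y
  proof -
    have "complex_of_real (walk_dist V E \<gamma> w k y) = (\<Sum>r\<in>D. complex_of_real r ^ k * Cc r y)"
      using fun_cong[OF walk_Top[OF g w, of \<gamma> k], of y] C by simp
    then have "walk_dist V E \<gamma> w k y = Re (\<Sum>r\<in>D. complex_of_real r ^ k * Cc r y)"
      by (metis Re_complex_of_real)
    also have "\<dots> = (\<Sum>r\<in>D. Re (Cc r y) * r ^ k)"
      unfolding Re_sum by (intro sum.cong refl) (simp add: of_real_power[symmetric] del: of_real_power)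
    finally show ?thesis .
  qed
  show ?thesis
    by (rule exI[of _ D], rule conjI[OF D], rule exI[of _ "\<lambda>r y. Re (Cc r y)"]) (simp add: eq)
qed

lemma pow_odd: "(x::real) ^ (2 * k + 1) = x * (x ^ 2) ^ k"
proof -
  have "x ^ (2 * k + 1) = x ^ (2 * k) * x" by (rule power_add[of x "2 * k" 1, unfolded power_one_right])
  also have "x ^ (2 * k) = (x ^ 2) ^ k" by (rule power_mult)
  finally show ?thesis by (simp only: mult.commute)
qed

lemma pow_even: "(x::real) ^ (2 * k) = (x ^ 2) ^ k"
  by (rule power_mult)

lemma ES_pow_term: "ES (\<lambda>k. c * (r ^ 2) ^ k)" for r :: real
proof (cases "r = 0")
  case True
  have "eventually (\<lambda>k. c * (r ^ 2) ^ k = 0) sequentially"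
    unfolding eventually_sequentially using True by (intro exI[of _ 1]) simp
  then show ?thesis by (rule ES_zero_ev)
next
  case False
  then have "r ^ 2 > 0" by simp
  then show ?thesis by (rule ES_single)
qed

lemma walk_ES:
  assumes g: "simple_connected_graph V E" and w: "w \<in> V"
  shows "ES (\<lambda>k. walk_dist V E \<gamma> w (2 * k) y) \<and> ES (\<lambda>k. walk_dist V E \<gamma> w (2 * k + 1) y)"
proof -
  obtain D C where D: "finite D" and C: "\<And>k y. walk_dist V E \<gamma> w k y = (\<Sum>r\<in>D. C r y * r ^ k)"
    using walk_expsum[OF g w, of \<gamma>] by metis
  have e: "walk_dist V E \<gamma> w (2 * k) y = (\<Sum>r\<in>D. C r y * (r ^ 2) ^ k)" for k
    unfolding C pow_even ..
  have o: "walk_dist V E \<gamma> w (2 * k + 1) y = (\<Sum>r\<in>D. (C r y * r) * (r ^ 2) ^ k)" for k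
    unfolding C pow_odd by (simp only: mult_ac)
  have "ES (\<lambda>k. \<Sum>r\<in>D. C r y * (r ^ 2) ^ k)" by (rule ES_sum[OF D]) (rule ES_pow_term)
  moreover have "ES (\<lambda>k. \<Sum>r\<in>D. (C r y * r) * (r ^ 2) ^ k)" by (rule ES_sum[OF D]) (rule ES_pow_term)
  ultimately show ?thesis unfolding e o by simp
qed


lemma deg_pos_all:
  assumes g: "simple_connected_graph V E" and x: "x \<in> V" and y: "y \<in> V" and xy: "x \<noteq> y"
  shows "deg E x > 0"
proof -
  have "(x, y) \<in> (edges E)\<^sup>*" using scg_parts(6)[OF g] x y by blast
  then show ?thesis
  proof (cases rule: converse_rtranclE)
    case base then show ?thesis using xy by simp
  next
    case (step z)
    then have "E x z" unfolding edges_def by simp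
    then show ?thesis by (rule deg_pos[OF g])
  qed
qed

lemma tp_nonneg: "0 \<le> \<gamma> \<Longrightarrow> \<gamma> \<le> 1 \<Longrightarrow> trans_prob E \<gamma> x y \<ge> 0"
  unfolding trans_prob_def by simp

lemma tp_rowsum:
  assumes g: "simple_connected_graph V E" and x: "x \<in> V" and dx: "deg E x > 0"
  shows "(\<Sum>y\<in>V. trans_prob E \<gamma> x y) = 1"
proof -
  have fin: "finite V" using g by (rule scg_fin)
  have s1: "(\<Sum>y\<in>V. (if x = y then \<gamma> else 0)) = \<gamma>" using fin x by (simp add: sum.delta)
  have nb: "{y\<in>V. E x y} = {y. E x y}" using nbr_sub[OF g] by blast
  have "(\<Sum>y\<in>V. (if E x y then (1 - \<gamma>) / real (deg E x) else 0)) = (\<Sum>y\<in>{y\<in>V. E x y}. (1 - \<gamma>) / real (deg E x))"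
    using fin by (rule sum.inter_filter[symmetric])
  also have "\<dots> = real (deg E x) * ((1 - \<gamma>) / real (deg E x))" unfolding nb deg_def by simp
  also have "\<dots> = 1 - \<gamma>" using dx by simp
  finally have s2: "(\<Sum>y\<in>V. (if E x y then (1 - \<gamma>) / real (deg E x) else 0)) = 1 - \<gamma>" .
  show ?thesis unfolding trans_prob_def sum.distrib s1 s2 by simp
qed

lemma walk_prob:
  assumes g: "simple_connected_graph V E" and w: "w \<in> V" and ga: "0 \<le> \<gamma>" "\<gamma> \<le> 1"
    and dpos: "\<And>x. x \<in> V \<Longrightarrow> deg E x > 0"
  shows "(\<forall>y. walk_dist V E \<gamma> w k y \<ge> 0) \<and> (\<Sum>y\<in>V. walk_dist V E \<gamma> w k y) = 1"
proof (induction k)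
  case 0
  have fin: "finite V" using g by (rule scg_fin)
  show ?case using fin w by (simp add: sum.delta')
next
  case (Suc k)
  have nn: "\<forall>y. walk_dist V E \<gamma> w (Suc k) y \<ge> 0"
  proof
    fix y
    show "walk_dist V E \<gamma> w (Suc k) y \<ge> 0"
      using Suc tp_nonneg[OF ga] unfolding walk_dist.simps by (intro sum_nonneg mult_nonneg_nonneg) auto
  qed
  have "(\<Sum>y\<in>V. walk_dist V E \<gamma> w (Suc k) y) = (\<Sum>y\<in>V. \<Sum>x\<in>V. walk_dist V E \<gamma> w k x * trans_prob E \<gamma> x y)"
    by simp
  also have "\<dots> = (\<Sum>x\<in>V. \<Sum>y\<in>V. walk_dist V E \<gamma> w k x * trans_prob E \<gamma> x y)" by (rule sum.swap)
  also have "\<dots> = (\<Sum>x\<in>V. walk_dist V E \<gamma> w k x * (\<Sum>y\<in>V. trans_prob E \<gamma> x y))"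
    by (simp add: sum_distrib_left)
  also have "\<dots> = (\<Sum>x\<in>V. walk_dist V E \<gamma> w k x)"
    by (intro sum.cong refl) (simp add: tp_rowsum[OF g _ dpos])
  also have "\<dots> = 1" using Suc by simp
  finally show ?case using nn by simp
qed

lemma prod_coupling:
  assumes "\<forall>x. \<mu> x \<ge> 0" "\<forall>y. \<nu> y \<ge> 0" "(\<Sum>x\<in>V. \<mu> x) = 1" "(\<Sum>y\<in>V. \<nu> y) = 1"
  shows "coupling V \<mu> \<nu> (\<lambda>x y. \<mu> x * \<nu> y)"
  unfolding coupling_def using assms by (simp add: sum_distrib_left[symmetric] sum_distrib_right[symmetric])

lemma W_bounds:
  assumes fin: "finite V" and p: "\<forall>x. \<mu> x \<ge> 0" "\<forall>y. \<nu> y \<ge> 0" "(\<Sum>x\<in>V. \<mu> x) = 1" "(\<Sum>y\<in>V. \<nu> y) = 1"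
  shows "\<bar>wasserstein V E \<mu> \<nu>\<bar> \<le> (\<Sum>x\<in>V. \<Sum>y\<in>V. real (gdist E x y))"
proof -
  define A where "A = {(\<Sum>x\<in>V. \<Sum>y\<in>V. real (gdist E x y) * T x y) | T. coupling V \<mu> \<nu> T}"
  define B where "B = (\<Sum>x\<in>V. \<Sum>y\<in>V. real (gdist E x y))"
  have W: "wasserstein V E \<mu> \<nu> = Inf A" unfolding wasserstein_def A_def ..
  have cp: "coupling V \<mu> \<nu> (\<lambda>x y. \<mu> x * \<nu> y)" by (rule prod_coupling[OF p])
  define a0 where "a0 = (\<Sum>x\<in>V. \<Sum>y\<in>V. real (gdist E x y) * (\<mu> x * \<nu> y))"
  have a0A: "a0 \<in> A" unfolding A_def a0_def mem_Collect_eq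
    by (rule exI[of _ "\<lambda>x y. \<mu> x * \<nu> y"], rule conjI[OF refl cp])
  have nnA: "a \<ge> 0" if aA: "a \<in> A" for a
  proof -
    obtain T where a: "a = (\<Sum>x\<in>V. \<Sum>y\<in>V. real (gdist E x y) * T x y)" and cT: "coupling V \<mu> \<nu> T"
      using aA unfolding A_def by blast
    show ?thesis unfolding a using cT unfolding coupling_def by (intro sum_nonneg) simp
  qed
  have le1: "\<mu> x \<le> 1" if "x \<in> V" for x
  proof -
    have "\<mu> x \<le> (\<Sum>x\<in>V. \<mu> x)" using fin that p(1) by (intro member_le_sum) auto
    then show ?thesis using p(3) by simp
  qed
  have gle: "real (gdist E x y) \<le> B" if "x \<in> V" "y \<in> V" for x y
  proof -
    have "real (gdist E x y) \<le> (\<Sum>y\<in>V. real (gdist E x y))" using fin that by (intro member_le_sum) auto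
    also have "\<dots> \<le> B" unfolding B_def using fin that by (intro member_le_sum sum_nonneg) auto
    finally show ?thesis .
  qed
  have "a0 \<le> (\<Sum>x\<in>V. \<Sum>y\<in>V. B * (\<mu> x * \<nu> y))"
    unfolding a0_def using gle p(1,2) by (intro sum_mono mult_right_mono) auto
  also have "\<dots> = B" using p(3,4) by (simp add: sum_distrib_left[symmetric] sum_distrib_right[symmetric])
  finally have a0B: "a0 \<le> B" .
  have "Inf A \<ge> 0" using a0A nnA by (intro cInf_greatest) auto
  moreover have "Inf A \<le> a0" using a0A nnA by (intro cInf_lower) (auto simp: bdd_below_def)
  ultimately show ?thesis unfolding W B_def[symmetric] using a0B by simp
qed


lemma final_forms:
  fixes s :: "nat \<Rightarrow> real"
  assumes es: "ES s" and bnd: "\<And>k. \<bar>s k\<bar> \<le> B"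
  shows "convergent s \<and> (eventually_constant s \<or> (\<exists>lam c::real. -1 < lam \<and> lam < 1 \<and> 0 < c \<and>
            (\<lambda>k. \<bar>s k - lim s\<bar>) \<sim>[sequentially] (\<lambda>k. c * \<bar>lam\<bar> ^ (2 * k))))"
    and "convergent s \<and> (eventually_constant s \<or> (\<exists>lam c::real. -1 < lam \<and> lam < 1 \<and> 0 < c \<and>
            (\<lambda>k. \<bar>s k - lim s\<bar>) \<sim>[sequentially] (\<lambda>k. c * \<bar>lam\<bar> ^ (2 * k + 1))))"
proof -
  have F: "convergent s \<and> ((\<exists>N. \<forall>k\<ge>N. s k = s N) \<or>
    (\<exists>q c. 0 < q \<and> q < 1 \<and> 0 < c \<and> (\<lambda>k. \<bar>s k - lim s\<bar>) \<sim>[sequentially] (\<lambda>k. c * q ^ k)))"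
    using ES_final[OF es bnd] .
  then have conv: "convergent s" by blast
  have "(\<exists>N. \<forall>k\<ge>N. s k = s N) \<or>
    (\<exists>q c. 0 < q \<and> q < 1 \<and> 0 < c \<and> (\<lambda>k. \<bar>s k - lim s\<bar>) \<sim>[sequentially] (\<lambda>k. c * q ^ k))"
    using F by blast
  then have "eventually_constant s \<or> (\<exists>q c. 0 < q \<and> q < 1 \<and> 0 < c \<and> (\<lambda>k. \<bar>s k - lim s\<bar>) \<sim>[sequentially] (\<lambda>k. c * q ^ k))"
    unfolding eventually_constant_def .
  then have C: "eventually_constant s \<or> (\<exists>q c. 0 < q \<and> q < 1 \<and> 0 < c \<and> (\<lambda>k. \<bar>s k - lim s\<bar>) \<sim>[sequentially] (\<lambda>k. c * q ^ k))" .
  show "convergent s \<and> (eventually_constant s \<or> (\<exists>lam c::real. -1 < lam \<and> lam < 1 \<and> 0 < c \<and>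
            (\<lambda>k. \<bar>s k - lim s\<bar>) \<sim>[sequentially] (\<lambda>k. c * \<bar>lam\<bar> ^ (2 * k))))"
  proof (cases "eventually_constant s")
    case True then show ?thesis using conv by blast
  next
    case False
    then obtain q c where qc: "0 < q" "q < 1" "0 < c" and eq: "(\<lambda>k. \<bar>s k - lim s\<bar>) \<sim>[sequentially] (\<lambda>k. c * q ^ k)"
      using C by blast
    define lam where "lam = sqrt q"
    have s0: "0 \<le> sqrt q" using qc by simp
    have l1: "-1 < lam" unfolding lam_def using s0 by linarith
    have l2: "lam < 1" unfolding lam_def using qc by simp
    note l = l1 l2
    have "(\<lambda>k. c * \<bar>lam\<bar> ^ (2 * k)) = (\<lambda>k. c * q ^ k)"
    proof (rule ext)
      fix k
      have "\<bar>lam\<bar> ^ (2 * k) = (sqrt q ^ 2) ^ k" unfolding lam_def using qc by (simp add: power_mult)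
      also have "\<dots> = q ^ k" using qc by simp
      finally show "c * \<bar>lam\<bar> ^ (2 * k) = c * q ^ k" by simp
    qed
    then have "(\<lambda>k. \<bar>s k - lim s\<bar>) \<sim>[sequentially] (\<lambda>k. c * \<bar>lam\<bar> ^ (2 * k))" using eq by simp
    then show ?thesis using conv l qc(3) by blast
  qed
  show "convergent s \<and> (eventually_constant s \<or> (\<exists>lam c::real. -1 < lam \<and> lam < 1 \<and> 0 < c \<and>
            (\<lambda>k. \<bar>s k - lim s\<bar>) \<sim>[sequentially] (\<lambda>k. c * \<bar>lam\<bar> ^ (2 * k + 1))))"
  proof (cases "eventually_constant s")
    case True then show ?thesis using conv by blast
  next
    case False
    then obtain q c where qc: "0 < q" "q < 1" "0 < c" and eq: "(\<lambda>k. \<bar>s k - lim s\<bar>) \<sim>[sequentially] (\<lambda>k. c * q ^ k)"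
      using C by blast
    define lam where "lam = sqrt q"
    define c' where "c' = c / sqrt q"
    have s0: "0 \<le> sqrt q" using qc by simp
    have l1: "-1 < lam" unfolding lam_def using s0 by linarith
    have l2: "lam < 1" unfolding lam_def using qc by simp
    note l = l1 l2
    have c'pos: "0 < c'" unfolding c'_def using qc by simp
    have "(\<lambda>k. c' * \<bar>lam\<bar> ^ (2 * k + 1)) = (\<lambda>k. c * q ^ k)"
    proof (rule ext)
      fix k
      have sq: "sqrt q > 0" using qc by simp
      have "\<bar>lam\<bar> ^ (2 * k + 1) = sqrt q * (sqrt q ^ 2) ^ k" unfolding lam_def using qc
        by (simp add: power_mult power_add)
      also have "\<dots> = sqrt q * q ^ k" using qc by simp
      finally show "c' * \<bar>lam\<bar> ^ (2 * k + 1) = c * q ^ k" unfolding c'_def using sq by simp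
    qed
    then have "(\<lambda>k. \<bar>s k - lim s\<bar>) \<sim>[sequentially] (\<lambda>k. c' * \<bar>lam\<bar> ^ (2 * k + 1))" using eq by simp
    then show ?thesis using conv l c'pos by blast
  qed
qed

lemma W_tcost: "wasserstein V E \<mu> \<nu> = Inf {tcost V (\<lambda>x y. real (gdist E x y)) T | T. coupling V \<mu> \<nu> T}"
  unfolding wasserstein_def tcost_def ..

lemma nonsingleton_ES:
  assumes G: "guvab V E u v \<alpha> \<beta>" and ns: "\<exists>x\<in>V. x \<noteq> u"
  shows "ES (\<lambda>k. W_seq V E u v \<alpha> \<beta> (2 * k)) \<and> ES (\<lambda>k. W_seq V E u v \<alpha> \<beta> (2 * k + 1)) \<and>
    (\<forall>k. \<bar>W_seq V E u v \<alpha> \<beta> k\<bar> \<le> (\<Sum>x\<in>V. \<Sum>y\<in>V. real (gdist E x y)))"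
proof -
  have g: "simple_connected_graph V E" and u: "u \<in> V" and v: "v \<in> V"
    and ab: "0 \<le> \<alpha>" "\<alpha> \<le> \<beta>" "\<beta> \<le> 1" using G unfolding guvab_def by auto
  have fin: "finite V" using g by (rule scg_fin)
  obtain x0 where x0: "x0 \<in> V" "x0 \<noteq> u" using ns by blast
  have dpos: "deg E x > 0" if x: "x \<in> V" for x
  proof (cases "x = u")
    case True then show ?thesis using deg_pos_all[OF g x x0(1)] x0(2) by simp
  next
    case False then show ?thesis using deg_pos_all[OF g x u] by simp
  qed
  have pa: "(\<forall>y. walk_dist V E \<alpha> u k y \<ge> 0) \<and> (\<Sum>y\<in>V. walk_dist V E \<alpha> u k y) = 1" for k
    by (rule walk_prob[OF g u]) (use ab dpos in auto)
  have pb: "(\<forall>y. walk_dist V E \<beta> v k y \<ge> 0) \<and> (\<Sum>y\<in>V. walk_dist V E \<beta> v k y) = 1" for k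
    by (rule walk_prob[OF g v]) (use ab dpos in auto)
  have feas: "\<exists>T. coupling V (walk_dist V E \<alpha> u k) (walk_dist V E \<beta> v k) T" for k
    using prod_coupling[of "walk_dist V E \<alpha> u k" "walk_dist V E \<beta> v k" V] pa[of k] pb[of k] by blast
  have bnd: "\<forall>k. \<bar>W_seq V E u v \<alpha> \<beta> k\<bar> \<le> (\<Sum>x\<in>V. \<Sum>y\<in>V. real (gdist E x y))"
    unfolding W_seq_def using W_bounds[OF fin] pa pb by blast
  have e: "ES (\<lambda>k. W_seq V E u v \<alpha> \<beta> (2 * k))"
    unfolding W_seq_def W_tcost
    by (rule LP_ES[OF fin], rule conjunct1[OF walk_ES[OF g u]], rule conjunct1[OF walk_ES[OF g v]], rule feas)
  have o: "ES (\<lambda>k. W_seq V E u v \<alpha> \<beta> (2 * k + 1))"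
    unfolding W_seq_def W_tcost
    by (rule LP_ES[OF fin], rule conjunct2[OF walk_ES[OF g u]], rule conjunct2[OF walk_ES[OF g v]], rule feas)
  show ?thesis using e o bnd by blast
qed


lemma singleton_const:
  assumes G: "guvab V E u v \<alpha> \<beta>" and sg: "\<forall>x\<in>V. x = u"
  shows "\<forall>k\<ge>1. W_seq V E u v \<alpha> \<beta> k = W_seq V E u v \<alpha> \<beta> 1"
proof -
  have g: "simple_connected_graph V E" and u: "u \<in> V" and v: "v \<in> V"
    and ab: "0 \<le> \<alpha>" "\<alpha> \<le> \<beta>" "\<beta> \<le> 1" using G unfolding guvab_def by auto
  have V: "V = {u}" using u sg by blast
  have vu: "v = u" using v sg by blast
  have tpu: "trans_prob E \<gamma> u u = \<gamma>" for \<gamma> unfolding trans_prob_def using scg_irrefl[OF g] by simp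
  have wk: "walk_dist V E \<gamma> u k u = \<gamma> ^ k" for \<gamma> k
    by (induction k) (simp_all add: V tpu)
  have gd: "gdist E u u = 0" unfolding gdist_def by (rule Least_eq_0) simp
  define A where "A k = {(\<Sum>x\<in>V. \<Sum>y\<in>V. real (gdist E x y) * T x y) | T. coupling V (walk_dist V E \<alpha> u k) (walk_dist V E \<beta> v k) T}" for k
  have cpl: "coupling V (walk_dist V E \<alpha> u k) (walk_dist V E \<beta> v k) T \<longleftrightarrow> 0 \<le> T u u \<and> T u u = \<alpha> ^ k \<and> T u u = \<beta> ^ k" for k T
    using wk[of \<alpha> k] wk[of \<beta> k] unfolding coupling_def V vu by simp
  have Ak: "A k = {a. a = 0 \<and> \<alpha> ^ k = \<beta> ^ k}" for k
  proof
    show "A k \<subseteq> {a. a = 0 \<and> \<alpha> ^ k = \<beta> ^ k}"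
    proof
      fix a :: real assume "a \<in> A k"
      then obtain T where a: "a = (\<Sum>x\<in>V. \<Sum>y\<in>V. real (gdist E x y) * T x y)"
        and cT: "coupling V (walk_dist V E \<alpha> u k) (walk_dist V E \<beta> v k) T" unfolding A_def by blast
      have "a = 0" unfolding a V using gd by simp
      moreover have "\<alpha> ^ k = \<beta> ^ k" using cT unfolding cpl by simp
      ultimately show "a \<in> {a. a = 0 \<and> \<alpha> ^ k = \<beta> ^ k}" by simp
    qed
  next
    show "{a. a = 0 \<and> \<alpha> ^ k = \<beta> ^ k} \<subseteq> A k"
    proof
      fix a :: real assume "a \<in> {a. a = 0 \<and> \<alpha> ^ k = \<beta> ^ k}"
      then have a0: "a = 0" and ak: "\<alpha> ^ k = \<beta> ^ k" by auto
      have cT: "coupling V (walk_dist V E \<alpha> u k) (walk_dist V E \<beta> v k) (\<lambda>x y. \<alpha> ^ k)"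
        unfolding cpl using ak ab by simp
      have eqa: "a = (\<Sum>x\<in>V. \<Sum>y\<in>V. real (gdist E x y) * (\<lambda>x y. \<alpha> ^ k) x y)" unfolding a0 V using gd by simp
      show "a \<in> A k" unfolding A_def mem_Collect_eq
        by (rule exI[of _ "\<lambda>x y. \<alpha> ^ k"]) (simp only: eqa cT simp_thms)
    qed
  qed
  have pk: "\<alpha> ^ k = \<beta> ^ k \<longleftrightarrow> \<alpha> = \<beta>" if "k \<ge> 1" for k
    using that ab by (intro power_eq_iff_eq_base) auto
  have "W_seq V E u v \<alpha> \<beta> k = W_seq V E u v \<alpha> \<beta> 1" if k: "k \<ge> 1" for k
  proof -
    have "W_seq V E u v \<alpha> \<beta> k = Inf (A k)" unfolding W_seq_def wasserstein_def A_def ..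
    also have "A k = A 1" unfolding Ak using pk[OF k] pk[of 1] by simp
    also have "Inf (A 1) = W_seq V E u v \<alpha> \<beta> 1" unfolding W_seq_def wasserstein_def A_def ..
    finally show ?thesis .
  qed
  then show ?thesis by blast
qed

theorem theorem8p1:
  fixes V :: "'a set" and E :: "'a \<Rightarrow> 'a \<Rightarrow> bool" and u v :: 'a and \<alpha> \<beta> :: real
  assumes "guvab V E u v \<alpha> \<beta>"
  defines "W \<equiv> W_seq V E u v \<alpha> \<beta>"
  shows "convergent (\<lambda>k. W (2 * k)) \<and> convergent (\<lambda>k. W (2 * k + 1)) \<and>
    (eventually_constant (\<lambda>k. W (2 * k)) \<or>
      (\<exists>lam c::real. -1 < lam \<and> lam < 1 \<and> 0 < c \<and>
        (\<lambda>k. \<bar>W (2 * k) - lim (\<lambda>k. W (2 * k))\<bar>) \<sim>[sequentially] (\<lambda>k. c * \<bar>lam\<bar> ^ (2 * k)))) \<and>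
    (eventually_constant (\<lambda>k. W (2 * k + 1)) \<or>
      (\<exists>lam c::real. -1 < lam \<and> lam < 1 \<and> 0 < c \<and>
        (\<lambda>k. \<bar>W (2 * k + 1) - lim (\<lambda>k. W (2 * k + 1))\<bar>) \<sim>[sequentially] (\<lambda>k. c * \<bar>lam\<bar> ^ (2 * k + 1))))"
proof (cases "\<exists>x\<in>V. x \<noteq> u")
  case True
  have N: "ES (\<lambda>k. W (2 * k)) \<and> ES (\<lambda>k. W (2 * k + 1)) \<and>
    (\<forall>k. \<bar>W k\<bar> \<le> (\<Sum>x\<in>V. \<Sum>y\<in>V. real (gdist E x y)))"
    unfolding W_def by (rule nonsingleton_ES[OF assms(1) True])
  have e: "ES (\<lambda>k. W (2 * k))" and o: "ES (\<lambda>k. W (2 * k + 1))"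
    and b: "\<And>k. \<bar>W k\<bar> \<le> (\<Sum>x\<in>V. \<Sum>y\<in>V. real (gdist E x y))" using N by simp_all
  have be: "\<bar>W (2 * k)\<bar> \<le> (\<Sum>x\<in>V. \<Sum>y\<in>V. real (gdist E x y))" for k by (rule b)
  have bo: "\<bar>W (2 * k + 1)\<bar> \<le> (\<Sum>x\<in>V. \<Sum>y\<in>V. real (gdist E x y))" for k by (rule b)
  note E1 = final_forms(1)[of "\<lambda>k. W (2 * k)", OF e be]
  note O1 = final_forms(2)[of "\<lambda>k. W (2 * k + 1)", OF o bo]
  have e1: "convergent (\<lambda>k. W (2 * k))" by (rule conjunct1[OF E1])
  have e2: "eventually_constant (\<lambda>k. W (2 * k)) \<or>
      (\<exists>lam c::real. -1 < lam \<and> lam < 1 \<and> 0 < c \<and>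
        (\<lambda>k. \<bar>W (2 * k) - lim (\<lambda>k. W (2 * k))\<bar>) \<sim>[sequentially] (\<lambda>k. c * \<bar>lam\<bar> ^ (2 * k)))"
    by (rule conjunct2[OF E1])
  have o1: "convergent (\<lambda>k. W (2 * k + 1))" by (rule conjunct1[OF O1])
  have o2: "eventually_constant (\<lambda>k. W (2 * k + 1)) \<or>
      (\<exists>lam c::real. -1 < lam \<and> lam < 1 \<and> 0 < c \<and>
        (\<lambda>k. \<bar>W (2 * k + 1) - lim (\<lambda>k. W (2 * k + 1))\<bar>) \<sim>[sequentially] (\<lambda>k. c * \<bar>lam\<bar> ^ (2 * k + 1)))"
    by (rule conjunct2[OF O1])
  show ?thesis by (rule conjI[OF e1 conjI[OF o1 conjI[OF e2 o2]]])
next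
  case False
  have sg: "\<forall>x\<in>V. x = u" using False by simp
  have c0: "\<forall>k\<ge>1. W_seq V E u v \<alpha> \<beta> k = W_seq V E u v \<alpha> \<beta> 1"
    using assms(1) sg by (rule singleton_const)
  have c: "\<forall>k\<ge>1. W k = W 1" using c0 unfolding W_def .
  have ce: "eventually_constant (\<lambda>k. W (2 * k))"
    unfolding eventually_constant_def
  proof (intro exI[of _ 1] allI impI)
    fix k :: nat assume k1: "k \<ge> 1"
    have "1 \<le> 2 * k" using k1 by simp
    then have a: "W (2 * k) = W 1" by (rule c[rule_format])
    have b: "W (2 * 1) = W 1" by (rule c[rule_format]) simp
    show "W (2 * k) = W (2 * 1)" unfolding a b ..
  qed
  have co: "eventually_constant (\<lambda>k. W (2 * k + 1))"
    unfolding eventually_constant_def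
  proof (intro exI[of _ 0] allI impI)
    fix k :: nat
    have "1 \<le> 2 * k + 1" by simp
    then have a: "W (2 * k + 1) = W 1" by (rule c[rule_format])
    show "W (2 * k + 1) = W (2 * 0 + 1)" unfolding a by simp
  qed
  have conv: "convergent S" if ecS: "eventually_constant S" for S :: "nat \<Rightarrow> real"
  proof -
    obtain N where N: "\<forall>k\<ge>N. S k = S N" using ecS unfolding eventually_constant_def by blast
    have "eventually (\<lambda>k. S k = S N) sequentially" unfolding eventually_sequentially using N by blast
    then have "S \<longlonglongrightarrow> S N" by (rule tendsto_eventually)
    then show ?thesis unfolding convergent_def by blast
  qed
  have o2: "eventually_constant (\<lambda>k. W (2 * k + 1)) \<or>
      (\<exists>lam c::real. -1 < lam \<and> lam < 1 \<and> 0 < c \<and>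
        (\<lambda>k. \<bar>W (2 * k + 1) - lim (\<lambda>k. W (2 * k + 1))\<bar>) \<sim>[sequentially] (\<lambda>k. c * \<bar>lam\<bar> ^ (2 * k + 1)))"
    by (rule disjI1[OF co])
  have e2: "eventually_constant (\<lambda>k. W (2 * k)) \<or>
      (\<exists>lam c::real. -1 < lam \<and> lam < 1 \<and> 0 < c \<and>
        (\<lambda>k. \<bar>W (2 * k) - lim (\<lambda>k. W (2 * k))\<bar>) \<sim>[sequentially] (\<lambda>k. c * \<bar>lam\<bar> ^ (2 * k)))"
    by (rule disjI1[OF ce])
  show ?thesis by (rule conjI[OF conv[OF ce] conjI[OF conv[OF co] conjI[OF e2 o2]]])
qed


end
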